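(* Fix $\theta\in\Theta_{\mathrm{reg}}$ and let $\hat\theta_n$ be an estimator with $\Delta_n:=\hat\theta_n-\theta=n^{-1/2}A_n(\theta)+n^{-1}B_n(\theta)+o_p(n^{-1})$, where $A_n,B_n=O_p(1)$. Assume the perturbative score expansion \[ 0=U_i(\theta)+(\nabla^2\ell)_{ij}(\theta)\Delta_n^j+\tfrac12(\nabla^3\ell)_{ijk}(\theta)\Delta_n^j\Delta_n^k+r_{i,n},\qquad r_{i,n}=o_p(n^{-1/2}), \] and the next-order control $A_n^a=g^{ai}(\theta)U_i(\theta)/\sqrt n+o_p(n^{-1/2})$. Then \[ B_{i,n}(\theta):=g_{ij}(\theta)B_n^j(\theta)=H_{ij,n}(\theta)A_n^j(\theta)+\tfrac12K_{ijk,n}(\theta)A_n^j(\theta)A_n^k(\theta)+o_p(1), \] where $H_{ij,n}=n^{-1/2}((\nabla^2\ell)_{ij}+ng_{ij})$ and $K_{ijk,n}=n^{-1}(\nabla^3\ell)_{ijk}$.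
   Context: $\{p_\theta:\theta\in\Theta\subset\mathbb{R}^d\}$ is a family of positive densities w.r.t. a $\sigma$-finite measure, $C^3$ in $\theta$ with the usual regularity permitting differentiation under the integral, and $X_1,\dots,X_n$ are i.i.d. from $p_\theta$. $g_{ij}=I_{ij}$ is the Fisher information (Fisher–Rao metric), $g^{ij}$ its inverse, $\Gamma^k_{ij}$ its Levi-Civita Christoffel symbols, $\Theta_{\mathrm{reg}}=\{\theta:\lambda_{\min}(I(\theta))>0\}$. $\ell(\theta)=\sum_t\log p_\theta(X_t)$, $U_i=\partial_i\ell$, $(\nabla^2\ell)_{ij}=\partial_i\partial_j\ell-\Gamma^k_{ij}U_k$ (covariant Hessian), $(\nabla^3\ell)_{ijk}$ the third covariant derivative. The standing moment assumptions hold: $\sup_{\vartheta}\mathbb{E}_\vartheta[(\partial_{ij}\log p_\vartheta)^2]<\infty$ and $\sup_\vartheta\mathbb{E}_\vartheta|\partial_{ijk}\log p_\vartheta|<\infty$ on a compact neighborhood of $\theta$ in $\Theta_{\mathrm{reg}}$. $O_p$, $o_p$ denote boundedness / convergence to zero in probability after normalization. Summation over repeated indices is implied. *)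

theory Defs
  imports "HOL-Probability.Probability"
begin

definition partial :: "'d::finite \<Rightarrow> (real^'d \<Rightarrow> real) \<Rightarrow> real^'d \<Rightarrow> real" where
  "partial i f v = deriv (\<lambda>t. f (v + t *\<^sub>R axis i 1)) 0"

definition has_partial :: "'d::finite \<Rightarrow> (real^'d \<Rightarrow> real) \<Rightarrow> real^'d \<Rightarrow> bool" where
  "has_partial i f v \<longleftrightarrow> (\<lambda>t. f (v + t *\<^sub>R axis i 1)) differentiable (at 0)"

fun Ck_on :: "nat \<Rightarrow> (real^'d::finite) set \<Rightarrow> (real^'d \<Rightarrow> real) \<Rightarrow> bool" where
  "Ck_on 0 S f = continuous_on S f"
| "Ck_on (Suc k) S f =
     (continuous_on S f \<and> (\<forall>i. \<forall>v\<in>S. has_partial i f v) \<and> (\<forall>i. Ck_on k S (partial i f)))"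

definition lambda_min :: "real^'d^'d \<Rightarrow> real" where
  "lambda_min G = (INF v\<in>{v::real^'d. norm v = 1}. v \<bullet> (G *v v))"

definition logp :: "(real^'d::finite \<Rightarrow> 'a \<Rightarrow> real) \<Rightarrow> 'a \<Rightarrow> real^'d \<Rightarrow> real" where
  "logp p x = (\<lambda>v. ln (p v x))"

definition fisher :: "'a measure \<Rightarrow> (real^'d::finite \<Rightarrow> 'a \<Rightarrow> real) \<Rightarrow> real^'d \<Rightarrow> real^'d^'d" where
  "fisher M p v = (\<chi> i j. \<integral>x. partial i (logp p x) v * partial j (logp p x) v * p v x \<partial>M)"

definition fisher_inv :: "'a measure \<Rightarrow> (real^'d::finite \<Rightarrow> 'a \<Rightarrow> real) \<Rightarrow> real^'d \<Rightarrow> real^'d^'d" where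
  "fisher_inv M p v = matrix_inv (fisher M p v)"

definition christoffel :: "'a measure \<Rightarrow> (real^'d::finite \<Rightarrow> 'a \<Rightarrow> real) \<Rightarrow> 'd \<Rightarrow> 'd \<Rightarrow> 'd \<Rightarrow> real^'d \<Rightarrow> real" where
  "christoffel M p k i j v = (1/2) * (\<Sum>l\<in>UNIV. fisher_inv M p v $ k $ l *
      (partial i (\<lambda>w. fisher M p w $ j $ l) v + partial j (\<lambda>w. fisher M p w $ i $ l) v
       - partial l (\<lambda>w. fisher M p w $ i $ j) v))"

definition Theta_reg :: "'a measure \<Rightarrow> (real^'d::finite \<Rightarrow> 'a \<Rightarrow> real) \<Rightarrow> (real^'d) set \<Rightarrow> (real^'d) set" where
  "Theta_reg M p \<Theta> = {v\<in>\<Theta>. lambda_min (fisher M p v) > 0}"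

definition covHess :: "'a measure \<Rightarrow> (real^'d::finite \<Rightarrow> 'a \<Rightarrow> real) \<Rightarrow> (real^'d \<Rightarrow> real)
    \<Rightarrow> 'd \<Rightarrow> 'd \<Rightarrow> real^'d \<Rightarrow> real" where
  "covHess M p L i j v = partial i (partial j L) v - (\<Sum>k\<in>UNIV. christoffel M p k i j v * partial k L v)"

definition cov3 :: "'a measure \<Rightarrow> (real^'d::finite \<Rightarrow> 'a \<Rightarrow> real) \<Rightarrow> (real^'d \<Rightarrow> real)
    \<Rightarrow> 'd \<Rightarrow> 'd \<Rightarrow> 'd \<Rightarrow> real^'d \<Rightarrow> real" where
  "cov3 M p L i j k v = partial k (covHess M p L i j) v
     - (\<Sum>m\<in>UNIV. christoffel M p m k i v * covHess M p L m j v)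
     - (\<Sum>m\<in>UNIV. christoffel M p m k j v * covHess M p L i m v)"

text \<open>Positive densities w.r.t. a sigma-finite measure, C^3 in the parameter, on an open
  parameter set, with the usual regularity permitting differentiation under the integral
  (of int p = 1, twice), finite Fisher information, and a C^2 Fisher metric.\<close>
definition stat_model :: "'a measure \<Rightarrow> (real^'d::finite \<Rightarrow> 'a \<Rightarrow> real) \<Rightarrow> (real^'d) set \<Rightarrow> bool" where
  "stat_model M p \<Theta> \<longleftrightarrow>
     sigma_finite_measure M \<and> open \<Theta> \<and>
     (\<forall>v\<in>\<Theta>. p v \<in> borel_measurable M \<and> (\<forall>x\<in>space M. p v x > 0)
        \<and> (\<integral>\<^sup>+ x. ennreal (p v x) \<partial>M) = 1) \<and>
     (\<forall>x\<in>space M. Ck_on 3 \<Theta> (logp p x)) \<and>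
     (\<forall>v\<in>\<Theta>. \<forall>i j.
        integrable M (\<lambda>x. (partial i (logp p x) v)\<^sup>2 * p v x) \<and>
        integrable M (\<lambda>x. partial i (\<lambda>w. p w x) v) \<and>
        (\<integral>x. partial i (\<lambda>w. p w x) v \<partial>M) = 0 \<and>
        integrable M (\<lambda>x. partial i (partial j (\<lambda>w. p w x)) v) \<and>
        (\<integral>x. partial i (partial j (\<lambda>w. p w x)) v \<partial>M) = 0) \<and>
     (\<forall>i j. Ck_on 2 \<Theta> (\<lambda>v. fisher M p v $ i $ j))"

definition moment_conditions :: "'a measure \<Rightarrow> (real^'d::finite \<Rightarrow> 'a \<Rightarrow> real) \<Rightarrow> (real^'d) set
    \<Rightarrow> real^'d \<Rightarrow> bool" where
  "moment_conditions M p \<Theta> \<theta> \<longleftrightarrow>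
     (\<exists>N. compact N \<and> \<theta> \<in> interior N \<and> N \<subseteq> Theta_reg M p \<Theta> \<and>
        (\<forall>i j. (SUP v\<in>N. \<integral>\<^sup>+ x. ennreal ((partial i (partial j (logp p x)) v)\<^sup>2 * p v x) \<partial>M) < \<infinity>) \<and>
        (\<forall>i j k. (SUP v\<in>N. \<integral>\<^sup>+ x. ennreal (\<bar>partial i (partial j (partial k (logp p x))) v\<bar> * p v x) \<partial>M) < \<infinity>))"

definition loglik :: "(real^'d::finite \<Rightarrow> 'a \<Rightarrow> real) \<Rightarrow> (nat \<Rightarrow> 'w \<Rightarrow> 'a) \<Rightarrow> nat \<Rightarrow> 'w \<Rightarrow> real^'d \<Rightarrow> real" where
  "loglik p X n \<omega> = (\<lambda>v. \<Sum>t<n. ln (p v (X t \<omega>)))"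

definition o_p :: "'w measure \<Rightarrow> (nat \<Rightarrow> 'w \<Rightarrow> 'b::real_normed_vector) \<Rightarrow> (nat \<Rightarrow> real) \<Rightarrow> bool" where
  "o_p P Y r \<longleftrightarrow> (\<forall>\<epsilon>>0. (\<lambda>n. measure P {\<omega>\<in>space P. \<epsilon> * r n < norm (Y n \<omega>)}) \<longlonglongrightarrow> 0)"

definition O_p1 :: "'w measure \<Rightarrow> (nat \<Rightarrow> 'w \<Rightarrow> 'b::real_normed_vector) \<Rightarrow> bool" where
  "O_p1 P Y \<longleftrightarrow> (\<forall>\<epsilon>>0. \<exists>C. \<forall>\<^sub>F n in sequentially. measure P {\<omega>\<in>space P. C < norm (Y n \<omega>)} < \<epsilon>)"

end

theory Submission
  imports Defs
begin

lemma has_partial_DERIV: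
  "has_partial i f v \<Longrightarrow> ((\<lambda>t. f (v + t *\<^sub>R axis i 1)) has_real_derivative partial i f v) (at 0)"
  unfolding has_partial_def partial_def by (simp add: DERIV_deriv_iff_real_differentiable)

lemma partial_DERIV_I:
  assumes "((\<lambda>t. f (v + t *\<^sub>R axis i 1)) has_real_derivative D) (at 0)"
  shows "has_partial i f v" "partial i f v = D"
  using assms unfolding has_partial_def partial_def
  by (auto simp: DERIV_imp_deriv real_differentiable_def)

lemma has_partial_add:
  assumes "has_partial i f v" "has_partial i g v"
  shows "has_partial i (\<lambda>w. f w + g w) v"
    "partial i (\<lambda>w. f w + g w) v = partial i f v + partial i g v"
  using DERIV_add[OF has_partial_DERIV[OF assms(1)] has_partial_DERIV[OF assms(2)]]
  by (auto intro: partial_DERIV_I)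

lemma has_partial_diff:
  assumes "has_partial i f v" "has_partial i g v"
  shows "has_partial i (\<lambda>w. f w - g w) v"
    "partial i (\<lambda>w. f w - g w) v = partial i f v - partial i g v"
  using DERIV_diff[OF has_partial_DERIV[OF assms(1)] has_partial_DERIV[OF assms(2)]]
  by (auto intro: partial_DERIV_I)

lemma has_partial_mult:
  assumes "has_partial i f v" "has_partial i g v"
  shows "has_partial i (\<lambda>w. f w * g w) v"
    "partial i (\<lambda>w. f w * g w) v = partial i f v * g v + f v * partial i g v"
  using DERIV_mult[OF has_partial_DERIV[OF assms(1)] has_partial_DERIV[OF assms(2)]]
  by (auto intro: partial_DERIV_I simp: mult.commute)

lemma has_partial_const:
  shows "has_partial i (\<lambda>w. c) v" "partial i (\<lambda>w. c) v = 0"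
  by (auto intro: partial_DERIV_I DERIV_const)

lemma has_partial_cmult:
  assumes "has_partial i f v"
  shows "has_partial i (\<lambda>w. c * f w) v"
    "partial i (\<lambda>w. c * f w) v = c * partial i f v"
  using DERIV_cmult[OF has_partial_DERIV[OF assms(1)], of c]
  by (auto intro: partial_DERIV_I)

lemma has_partial_sum:
  assumes "finite T" "\<And>t. t \<in> T \<Longrightarrow> has_partial i (f t) v"
  shows "has_partial i (\<lambda>w. \<Sum>t\<in>T. f t w) v"
    "partial i (\<lambda>w. \<Sum>t\<in>T. f t w) v = (\<Sum>t\<in>T. partial i (f t) v)"
proof -
  have "((\<lambda>s. \<Sum>t\<in>T. f t (v + s *\<^sub>R axis i 1)) has_real_derivative (\<Sum>t\<in>T. partial i (f t) v)) (at 0)"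
    by (rule DERIV_sum) (use assms has_partial_DERIV in auto)
  then show "has_partial i (\<lambda>w. \<Sum>t\<in>T. f t w) v"
    "partial i (\<lambda>w. \<Sum>t\<in>T. f t w) v = (\<Sum>t\<in>T. partial i (f t) v)"
    by (auto intro: partial_DERIV_I)
qed

lemma line_eventually:
  assumes "open S" "v \<in> S"
  shows "\<forall>\<^sub>F t in nhds 0. v + t *\<^sub>R (e::real^'d) \<in> S"
proof -
  have "continuous_on UNIV (\<lambda>t::real. v + t *\<^sub>R e)"
    by (intro continuous_intros)
  then have "open ((\<lambda>t::real. v + t *\<^sub>R e) -` S)"
    using assms(1) open_vimage by blast
  moreover have "0 \<in> (\<lambda>t::real. v + t *\<^sub>R e) -` S" using assms(2) by simp
  ultimately show ?thesis
    using eventually_nhds_in_open by fastforce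
qed

lemma partial_local:
  assumes "open S" "v \<in> S" "\<And>w. w \<in> S \<Longrightarrow> f w = g w"
  shows "partial i f v = partial i g v" "has_partial i f v \<longleftrightarrow> has_partial i g v"
proof -
  have ev: "\<forall>\<^sub>F t in nhds 0. f (v + t *\<^sub>R axis i 1) = g (v + t *\<^sub>R axis i 1)"
    using line_eventually[OF assms(1,2), of "axis i 1"] by eventually_elim (use assms(3) in auto)
  show "partial i f v = partial i g v"
    unfolding partial_def by (rule deriv_cong_ev[OF ev refl])
  show "has_partial i f v \<longleftrightarrow> has_partial i g v"
    unfolding has_partial_def real_differentiable_def
    using DERIV_cong_ev[OF refl ev refl] by blast
qed

lemma has_partial_local:
  assumes "open S" "v \<in> S" "\<And>w. w \<in> S \<Longrightarrow> f w = g w" "has_partial i g v"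
  shows "has_partial i f v" "partial i f v = partial i g v"
  using partial_local[OF assms(1-3)] assms(4) by auto

lemma Ck3_D:
  assumes "Ck_on 3 S f" "v \<in> S"
  shows "has_partial i f v" "has_partial i (partial j f) v"
    "has_partial i (partial j (partial k f)) v"
  using assms by (simp_all add: numeral_3_eq_3)

lemma Ck2_D:
  assumes "Ck_on 2 S f" "v \<in> S"
  shows "has_partial i f v" "has_partial i (partial j f) v"
  using assms by (simp_all add: numeral_2_eq_2)

lemma partial_sum_open:
  assumes S: "open S" and T: "finite T" and C: "\<And>t. t \<in> T \<Longrightarrow> Ck_on 3 S (f t)" and v: "v \<in> S"
  shows "partial i (\<lambda>w. \<Sum>t\<in>T. f t w) v = (\<Sum>t\<in>T. partial i (f t) v)"
    "partial i (partial j (\<lambda>w. \<Sum>t\<in>T. f t w)) v = (\<Sum>t\<in>T. partial i (partial j (f t)) v)"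
    "partial i (partial j (partial k (\<lambda>w. \<Sum>t\<in>T. f t w))) v = (\<Sum>t\<in>T. partial i (partial j (partial k (f t))) v)"
    "has_partial i (\<lambda>w. \<Sum>t\<in>T. f t w) v"
    "has_partial i (partial j (\<lambda>w. \<Sum>t\<in>T. f t w)) v"
    "has_partial i (partial j (partial k (\<lambda>w. \<Sum>t\<in>T. f t w))) v"
proof -
  have 1: "\<And>i w. w \<in> S \<Longrightarrow> partial i (\<lambda>w. \<Sum>t\<in>T. f t w) w = (\<Sum>t\<in>T. partial i (f t) w)"
    "\<And>i w. w \<in> S \<Longrightarrow> has_partial i (\<lambda>w. \<Sum>t\<in>T. f t w) w"
    by (simp_all add: has_partial_sum[OF T] Ck3_D(1)[OF C])
  have 2: "\<And>i j w. w \<in> S \<Longrightarrow> partial i (partial j (\<lambda>w. \<Sum>t\<in>T. f t w)) w = (\<Sum>t\<in>T. partial i (partial j (f t)) w)"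
    "\<And>i j w. w \<in> S \<Longrightarrow> has_partial i (partial j (\<lambda>w. \<Sum>t\<in>T. f t w)) w"
  proof -
    fix i j w assume w: "w \<in> S"
    have h: "has_partial i (\<lambda>w. \<Sum>t\<in>T. partial j (f t) w) w"
      "partial i (\<lambda>w. \<Sum>t\<in>T. partial j (f t) w) w = (\<Sum>t\<in>T. partial i (partial j (f t)) w)"
      by (simp_all add: has_partial_sum[OF T] Ck3_D(2)[OF C w])
    show "partial i (partial j (\<lambda>w. \<Sum>t\<in>T. f t w)) w = (\<Sum>t\<in>T. partial i (partial j (f t)) w)"
      "has_partial i (partial j (\<lambda>w. \<Sum>t\<in>T. f t w)) w"
      using has_partial_local[OF S w 1(1) h(1)] h(2) by auto
  qed
  have 3: "partial i (partial j (partial k (\<lambda>w. \<Sum>t\<in>T. f t w))) v = (\<Sum>t\<in>T. partial i (partial j (partial k (f t))) v)"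
    "has_partial i (partial j (partial k (\<lambda>w. \<Sum>t\<in>T. f t w))) v"
  proof -
    have h: "has_partial i (\<lambda>w. \<Sum>t\<in>T. partial j (partial k (f t)) w) v"
      "partial i (\<lambda>w. \<Sum>t\<in>T. partial j (partial k (f t)) w) v = (\<Sum>t\<in>T. partial i (partial j (partial k (f t))) v)"
      by (simp_all add: has_partial_sum[OF T] Ck3_D(3)[OF C v])
    show "partial i (partial j (partial k (\<lambda>w. \<Sum>t\<in>T. f t w))) v = (\<Sum>t\<in>T. partial i (partial j (partial k (f t))) v)"
      "has_partial i (partial j (partial k (\<lambda>w. \<Sum>t\<in>T. f t w))) v"
      using has_partial_local[OF S v 2(1) h(1)] h(2) by auto
  qed
  show "partial i (\<lambda>w. \<Sum>t\<in>T. f t w) v = (\<Sum>t\<in>T. partial i (f t) v)"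
    "partial i (partial j (\<lambda>w. \<Sum>t\<in>T. f t w)) v = (\<Sum>t\<in>T. partial i (partial j (f t)) v)"
    "has_partial i (\<lambda>w. \<Sum>t\<in>T. f t w) v"
    "has_partial i (partial j (\<lambda>w. \<Sum>t\<in>T. f t w)) v"
    using 1 2 v by auto
  show "partial i (partial j (partial k (\<lambda>w. \<Sum>t\<in>T. f t w))) v = (\<Sum>t\<in>T. partial i (partial j (partial k (f t))) v)"
    "has_partial i (partial j (partial k (\<lambda>w. \<Sum>t\<in>T. f t w))) v" using 3 by auto
qed

lemma partial_quotient_tendsto:
  assumes "has_partial i f v"
  shows "(\<lambda>m. (f (v + (1 / real (Suc m)) *\<^sub>R axis i 1) - f v) / (1 / real (Suc m)))
           \<longlonglongrightarrow> partial i f v"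
proof -
  have D: "((\<lambda>h. (f (v + (0 + h) *\<^sub>R axis i 1) - f (v + 0 *\<^sub>R axis i 1)) / h) \<longlongrightarrow> partial i f v) (at 0)"
    using has_partial_DERIV[OF assms] unfolding DERIV_def .
  have h: "filterlim (\<lambda>m. 1 / real (Suc m)) (at (0::real)) sequentially"
  proof (rule filterlim_atI)
    show "(\<lambda>m. 1 / real (Suc m)) \<longlonglongrightarrow> (0::real)"
      using LIMSEQ_inverse_real_of_nat by (simp add: inverse_eq_divide)
  qed auto
  show ?thesis using filterlim_compose[OF D h] by simp
qed

lemma measurable_partial:
  assumes S: "open S" and v: "v \<in> S"
    and meas: "\<And>w. w \<in> S \<Longrightarrow> (\<lambda>x. F w x) \<in> borel_measurable M"
    and hp: "\<And>x. x \<in> space M \<Longrightarrow> has_partial i (\<lambda>w. F w x) v"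
  shows "(\<lambda>x. partial i (\<lambda>w. F w x) v) \<in> borel_measurable M"
proof -
  define h :: "nat \<Rightarrow> real" where "h m = 1 / real (Suc m)" for m
  define u where "u m x = (if v + h m *\<^sub>R axis i 1 \<in> S then (F (v + h m *\<^sub>R axis i 1) x - F v x) / h m else 0)" for m x
  have ev: "\<forall>\<^sub>F m in sequentially. v + h m *\<^sub>R axis i 1 \<in> S"
  proof -
    have "(\<lambda>m. v + h m *\<^sub>R axis i 1) \<longlonglongrightarrow> v + 0 *\<^sub>R axis i 1"
      unfolding h_def
      by (intro tendsto_intros) (use LIMSEQ_inverse_real_of_nat in \<open>simp add: inverse_eq_divide\<close>)
    then show ?thesis using S v topological_tendstoD by fastforce
  qed
  show ?thesis
  proof (rule borel_measurable_LIMSEQ_real[where u=u])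
    fix m show "u m \<in> borel_measurable M"
      unfolding u_def using meas v by (cases "v + h m *\<^sub>R axis i 1 \<in> S") auto
  next
    fix x assume x: "x \<in> space M"
    have "(\<lambda>m. (F (v + h m *\<^sub>R axis i 1) x - F v x) / h m) \<longlonglongrightarrow> partial i (\<lambda>w. F w x) v"
      using partial_quotient_tendsto[OF hp[OF x]] unfolding h_def by simp
    then show "(\<lambda>m. u m x) \<longlonglongrightarrow> partial i (\<lambda>w. F w x) v"
      by (rule Lim_transform_eventually) (use ev in \<open>eventually_elim, simp add: u_def\<close>)
  qed
qed

definition cvg0 :: "'w measure \<Rightarrow> (nat \<Rightarrow> 'w \<Rightarrow> real) \<Rightarrow> bool" where
  "cvg0 P Y \<longleftrightarrow> (\<forall>n. Y n \<in> borel_measurable P) \<and>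
     (\<forall>\<epsilon>>0. (\<lambda>n. measure P {\<omega>\<in>space P. \<epsilon> < \<bar>Y n \<omega>\<bar>}) \<longlonglongrightarrow> 0)"

definition bddp :: "'w measure \<Rightarrow> (nat \<Rightarrow> 'w \<Rightarrow> real) \<Rightarrow> bool" where
  "bddp P Y \<longleftrightarrow> (\<forall>n. Y n \<in> borel_measurable P) \<and>
     (\<forall>\<epsilon>>0. \<exists>C. \<forall>\<^sub>F n in sequentially. measure P {\<omega>\<in>space P. C < \<bar>Y n \<omega>\<bar>} < \<epsilon>)"

lemma tendsto0_crit:
  fixes f :: "nat \<Rightarrow> real"
  assumes "\<And>n. 0 \<le> f n" "\<And>\<delta>. \<delta> > 0 \<Longrightarrow> \<forall>\<^sub>F n in sequentially. f n < \<delta>"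
  shows "f \<longlonglongrightarrow> 0"
proof (rule order_tendstoI)
  fix a :: real assume "a < 0"
  then have "\<forall>n. a < f n" using assms(1) by (meson less_le_trans)
  then show "\<forall>\<^sub>F n in sequentially. a < f n" by (simp add: always_eventually)
qed (use assms(2) in auto)

lemma measure_le_Un:
  assumes "finite_measure P" "A \<subseteq> B \<union> C" "B \<in> sets P" "C \<in> sets P"
  shows "measure P A \<le> measure P B + measure P C"
proof -
  have "measure P A \<le> measure P (B \<union> C)"
    using finite_measure.finite_measure_mono[OF assms(1) assms(2)] assms(3,4) by auto
  also have "\<dots> \<le> measure P B + measure P C" by (rule measure_Un_le) (use assms in auto)
  finally show ?thesis .
qed

lemma set_meas[measurable]:
  fixes Y :: "'w \<Rightarrow> real"
  shows "Y \<in> borel_measurable P \<Longrightarrow> {\<omega>\<in>space P. c < \<bar>Y \<omega>\<bar>} \<in> sets P"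
  by measurable

context
  fixes P :: "'w measure"
  assumes P: "prob_space P"
begin

lemma fmP: "finite_measure P" using P prob_space.finite_measure by blast

lemma cvg0_set: "cvg0 P Y \<Longrightarrow> {\<omega>\<in>space P. c < \<bar>Y n \<omega>\<bar>} \<in> sets P"
  by (rule set_meas) (simp add: cvg0_def)
lemma bddp_set: "bddp P Y \<Longrightarrow> {\<omega>\<in>space P. c < \<bar>Y n \<omega>\<bar>} \<in> sets P"
  by (rule set_meas) (simp add: bddp_def)

lemma cvg0_meas: "cvg0 P Y \<Longrightarrow> Y n \<in> borel_measurable P" by (simp add: cvg0_def)
lemma bddp_meas: "bddp P Y \<Longrightarrow> Y n \<in> borel_measurable P" by (simp add: bddp_def)

lemma cvg0_add:
  assumes Y: "cvg0 P Y" and Z: "cvg0 P Z"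
  shows "cvg0 P (\<lambda>n \<omega>. Y n \<omega> + Z n \<omega>)"
  unfolding cvg0_def
proof safe
  fix n show "(\<lambda>\<omega>. Y n \<omega> + Z n \<omega>) \<in> borel_measurable P"
    using Y Z by (auto simp: cvg0_def intro!: borel_measurable_add)
next
  fix \<epsilon> :: real assume e: "\<epsilon> > 0"
  have l1: "(\<lambda>n. measure P {\<omega>\<in>space P. \<epsilon>/2 < \<bar>Y n \<omega>\<bar>}) \<longlonglongrightarrow> 0"
    "(\<lambda>n. measure P {\<omega>\<in>space P. \<epsilon>/2 < \<bar>Z n \<omega>\<bar>}) \<longlonglongrightarrow> 0"
    using Y Z half_gt_zero[OF e] unfolding cvg0_def by blast+
  have le: "measure P {\<omega>\<in>space P. \<epsilon> < \<bar>Y n \<omega> + Z n \<omega>\<bar>} \<le>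
      measure P {\<omega>\<in>space P. \<epsilon>/2 < \<bar>Y n \<omega>\<bar>} + measure P {\<omega>\<in>space P. \<epsilon>/2 < \<bar>Z n \<omega>\<bar>}" for n
    by (rule measure_le_Un[OF fmP _ cvg0_set[OF Y] cvg0_set[OF Z]]) auto
  show "(\<lambda>n. measure P {\<omega>\<in>space P. \<epsilon> < \<bar>Y n \<omega> + Z n \<omega>\<bar>}) \<longlonglongrightarrow> 0"
  proof (rule tendsto_sandwich[of "\<lambda>_. 0" _ _ "\<lambda>n. measure P {\<omega>\<in>space P. \<epsilon>/2 < \<bar>Y n \<omega>\<bar>} + measure P {\<omega>\<in>space P. \<epsilon>/2 < \<bar>Z n \<omega>\<bar>}"])
    show "(\<lambda>n. measure P {\<omega>\<in>space P. \<epsilon>/2 < \<bar>Y n \<omega>\<bar>} + measure P {\<omega>\<in>space P. \<epsilon>/2 < \<bar>Z n \<omega>\<bar>}) \<longlonglongrightarrow> 0"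
      using tendsto_add[OF l1] by simp
  qed (use le in \<open>simp_all add: always_eventually\<close>)
qed

lemma bddp_pos:
  assumes "bddp P Y" "\<epsilon> > 0"
  shows "\<exists>C>0. \<forall>\<^sub>F n in sequentially. measure P {\<omega>\<in>space P. C < \<bar>Y n \<omega>\<bar>} < \<epsilon>"
proof -
  obtain C where C: "\<forall>\<^sub>F n in sequentially. measure P {\<omega>\<in>space P. C < \<bar>Y n \<omega>\<bar>} < \<epsilon>"
    using assms by (auto simp: bddp_def)
  have le: "measure P {\<omega>\<in>space P. max C 1 < \<bar>Y n \<omega>\<bar>} \<le> measure P {\<omega>\<in>space P. C < \<bar>Y n \<omega>\<bar>}" for n
    by (rule finite_measure.finite_measure_mono[OF fmP _ bddp_set[OF assms(1)]]) auto
  have "\<forall>\<^sub>F n in sequentially. measure P {\<omega>\<in>space P. max C 1 < \<bar>Y n \<omega>\<bar>} < \<epsilon>"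
    using C proof eventually_elim
    case (elim n) then show ?case using le[of n] by linarith
  qed
  then show ?thesis by (intro exI[of _ "max C 1"]) auto
qed

lemma cvg0_mult_bddp:
  assumes Y: "cvg0 P Y" and Z: "bddp P Z"
  shows "cvg0 P (\<lambda>n \<omega>. Y n \<omega> * Z n \<omega>)"
  unfolding cvg0_def
proof safe
  fix n show "(\<lambda>\<omega>. Y n \<omega> * Z n \<omega>) \<in> borel_measurable P"
    using Y Z by (auto simp: cvg0_def bddp_def intro!: borel_measurable_times)
next
  fix \<epsilon> :: real assume e: "\<epsilon> > 0"
  show "(\<lambda>n. measure P {\<omega>\<in>space P. \<epsilon> < \<bar>Y n \<omega> * Z n \<omega>\<bar>}) \<longlonglongrightarrow> 0"
  proof (rule tendsto0_crit)
    fix \<delta> :: real assume d: "\<delta> > 0"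
    obtain C where C: "C > 0" "\<forall>\<^sub>F n in sequentially. measure P {\<omega>\<in>space P. C < \<bar>Z n \<omega>\<bar>} < \<delta>/2"
      using bddp_pos[OF Z, of "\<delta>/2"] d by auto
    have "(\<lambda>n. measure P {\<omega>\<in>space P. \<epsilon>/C < \<bar>Y n \<omega>\<bar>}) \<longlonglongrightarrow> 0"
      using Y e C by (auto simp: cvg0_def)
    then have ev: "\<forall>\<^sub>F n in sequentially. measure P {\<omega>\<in>space P. \<epsilon>/C < \<bar>Y n \<omega>\<bar>} < \<delta>/2"
      using order_tendstoD(2)[OF _ half_gt_zero[OF d]] by blast
    have sub: "{\<omega>\<in>space P. \<epsilon> < \<bar>Y n \<omega> * Z n \<omega>\<bar>} \<subseteq> {\<omega>\<in>space P. C < \<bar>Z n \<omega>\<bar>} \<union> {\<omega>\<in>space P. \<epsilon>/C < \<bar>Y n \<omega>\<bar>}" for n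
    proof safe
      fix \<omega> assume "\<omega> \<in> space P" "\<epsilon> < \<bar>Y n \<omega> * Z n \<omega>\<bar>" "\<not> \<epsilon> / C < \<bar>Y n \<omega>\<bar>"
      then have "\<bar>Y n \<omega>\<bar> \<le> \<epsilon>/C" "\<epsilon> < \<bar>Y n \<omega>\<bar> * \<bar>Z n \<omega>\<bar>" by (auto simp: abs_mult)
      show "C < \<bar>Z n \<omega>\<bar>"
      proof (rule ccontr)
        assume "\<not> C < \<bar>Z n \<omega>\<bar>"
        then have "\<bar>Y n \<omega>\<bar> * \<bar>Z n \<omega>\<bar> \<le> (\<epsilon>/C) * C"
          using \<open>\<bar>Y n \<omega>\<bar> \<le> \<epsilon>/C\<close> C(1) by (intro mult_mono) auto
        then show False using \<open>\<epsilon> < \<bar>Y n \<omega>\<bar> * \<bar>Z n \<omega>\<bar>\<close> C(1) by simp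
      qed
    qed
    have le: "measure P {\<omega>\<in>space P. \<epsilon> < \<bar>Y n \<omega> * Z n \<omega>\<bar>} \<le>
        measure P {\<omega>\<in>space P. C < \<bar>Z n \<omega>\<bar>} + measure P {\<omega>\<in>space P. \<epsilon>/C < \<bar>Y n \<omega>\<bar>}" for n
      by (rule measure_le_Un[OF fmP sub bddp_set[OF Z] cvg0_set[OF Y]])
    show "\<forall>\<^sub>F n in sequentially. measure P {\<omega>\<in>space P. \<epsilon> < \<bar>Y n \<omega> * Z n \<omega>\<bar>} < \<delta>"
      using ev C(2)
    proof eventually_elim
      case (elim n) then show ?case using le[of n] by linarith
    qed
  qed simp
qed

lemma bddp_add:
  assumes Y: "bddp P Y" and Z: "bddp P Z"
  shows "bddp P (\<lambda>n \<omega>. Y n \<omega> + Z n \<omega>)"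
  unfolding bddp_def
proof safe
  fix n show "(\<lambda>\<omega>. Y n \<omega> + Z n \<omega>) \<in> borel_measurable P"
    using Y Z by (auto simp: bddp_def intro!: borel_measurable_add)
next
  fix \<epsilon> :: real assume e: "\<epsilon> > 0"
  obtain C1 where C1: "\<forall>\<^sub>F n in sequentially. measure P {\<omega>\<in>space P. C1 < \<bar>Y n \<omega>\<bar>} < \<epsilon>/2"
    using Y half_gt_zero[OF e] unfolding bddp_def by blast
  obtain C2 where C2: "\<forall>\<^sub>F n in sequentially. measure P {\<omega>\<in>space P. C2 < \<bar>Z n \<omega>\<bar>} < \<epsilon>/2"
    using Z half_gt_zero[OF e] unfolding bddp_def by blast
  have le: "measure P {\<omega>\<in>space P. C1 + C2 < \<bar>Y n \<omega> + Z n \<omega>\<bar>} \<le>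
        measure P {\<omega>\<in>space P. C1 < \<bar>Y n \<omega>\<bar>} + measure P {\<omega>\<in>space P. C2 < \<bar>Z n \<omega>\<bar>}" for n
    by (rule measure_le_Un[OF fmP _ bddp_set[OF Y] bddp_set[OF Z]]) auto
  show "\<exists>C. \<forall>\<^sub>F n in sequentially. measure P {\<omega>\<in>space P. C < \<bar>Y n \<omega> + Z n \<omega>\<bar>} < \<epsilon>"
  proof (rule exI[of _ "C1 + C2"])
    show "\<forall>\<^sub>F n in sequentially. measure P {\<omega>\<in>space P. C1 + C2 < \<bar>Y n \<omega> + Z n \<omega>\<bar>} < \<epsilon>"
      using C1 C2 proof eventually_elim
      case (elim n) then show ?case using le[of n] by linarith
    qed
  qed
qed

lemma bddp_mult:
  assumes Y: "bddp P Y" and Z: "bddp P Z"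
  shows "bddp P (\<lambda>n \<omega>. Y n \<omega> * Z n \<omega>)"
  unfolding bddp_def
proof safe
  fix n show "(\<lambda>\<omega>. Y n \<omega> * Z n \<omega>) \<in> borel_measurable P"
    using Y Z by (auto simp: bddp_def intro!: borel_measurable_times)
next
  fix \<epsilon> :: real assume e: "\<epsilon> > 0"
  obtain C1 where C1: "C1 > 0" "\<forall>\<^sub>F n in sequentially. measure P {\<omega>\<in>space P. C1 < \<bar>Y n \<omega>\<bar>} < \<epsilon>/2"
    using bddp_pos[OF Y, of "\<epsilon>/2"] e by auto
  obtain C2 where C2: "C2 > 0" "\<forall>\<^sub>F n in sequentially. measure P {\<omega>\<in>space P. C2 < \<bar>Z n \<omega>\<bar>} < \<epsilon>/2"
    using bddp_pos[OF Z, of "\<epsilon>/2"] e by auto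
  have sub: "{\<omega>\<in>space P. C1 * C2 < \<bar>Y n \<omega> * Z n \<omega>\<bar>} \<subseteq> {\<omega>\<in>space P. C1 < \<bar>Y n \<omega>\<bar>} \<union> {\<omega>\<in>space P. C2 < \<bar>Z n \<omega>\<bar>}" for n
  proof safe
    fix \<omega> assume "\<omega> \<in> space P" "C1 * C2 < \<bar>Y n \<omega> * Z n \<omega>\<bar>" "\<not> C2 < \<bar>Z n \<omega>\<bar>"
    then have "C1 * C2 < \<bar>Y n \<omega>\<bar> * \<bar>Z n \<omega>\<bar>" "\<bar>Z n \<omega>\<bar> \<le> C2" by (auto simp: abs_mult)
    show "C1 < \<bar>Y n \<omega>\<bar>"
    proof (rule ccontr)
      assume "\<not> C1 < \<bar>Y n \<omega>\<bar>"
      then have "\<bar>Y n \<omega>\<bar> * \<bar>Z n \<omega>\<bar> \<le> C1 * C2"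
        using \<open>\<bar>Z n \<omega>\<bar> \<le> C2\<close> C1(1) by (intro mult_mono) auto
      then show False using \<open>C1 * C2 < \<bar>Y n \<omega>\<bar> * \<bar>Z n \<omega>\<bar>\<close> by simp
    qed
  qed
  have le: "measure P {\<omega>\<in>space P. C1 * C2 < \<bar>Y n \<omega> * Z n \<omega>\<bar>} \<le>
        measure P {\<omega>\<in>space P. C1 < \<bar>Y n \<omega>\<bar>} + measure P {\<omega>\<in>space P. C2 < \<bar>Z n \<omega>\<bar>}" for n
      by (rule measure_le_Un[OF fmP sub bddp_set[OF Y] bddp_set[OF Z]])
  show "\<exists>C. \<forall>\<^sub>F n in sequentially. measure P {\<omega>\<in>space P. C < \<bar>Y n \<omega> * Z n \<omega>\<bar>} < \<epsilon>"
  proof (rule exI[of _ "C1 * C2"])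
    show "\<forall>\<^sub>F n in sequentially. measure P {\<omega>\<in>space P. C1 * C2 < \<bar>Y n \<omega> * Z n \<omega>\<bar>} < \<epsilon>"
      using C1(2) C2(2) proof eventually_elim
      case (elim n) then show ?case using le[of n] by linarith
    qed
  qed
qed

lemma bddp_const: "bddp P (\<lambda>n \<omega>. c)"
  unfolding bddp_def by (auto intro!: exI[of _ "\<bar>c\<bar>"])

lemma cvg0_det:
  assumes "c \<longlonglongrightarrow> 0"
  shows "cvg0 P (\<lambda>n \<omega>. c n)"
  unfolding cvg0_def
proof safe
  fix \<epsilon> :: real assume e: "\<epsilon> > 0"
  have "\<forall>\<^sub>F n in sequentially. \<bar>c n\<bar> < \<epsilon>"
    using order_tendstoD(2)[OF tendsto_rabs_zero[OF assms] e] .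
  then have "\<forall>\<^sub>F n in sequentially. measure P {\<omega>\<in>space P. \<epsilon> < \<bar>c n\<bar>} = 0"
  proof eventually_elim
    case (elim n) then have "\<not> \<epsilon> < \<bar>c n\<bar>" by simp
    then show ?case by simp
  qed
  then show "(\<lambda>n. measure P {\<omega>\<in>space P. \<epsilon> < \<bar>c n\<bar>}) \<longlonglongrightarrow> 0"
    by (rule tendsto_eventually)
qed simp

lemma cvg0_imp_bddp:
  assumes "cvg0 P Y" shows "bddp P Y"
  unfolding bddp_def
proof safe
  fix n show "Y n \<in> borel_measurable P" using assms by (simp add: cvg0_def)
next
  fix \<epsilon> :: real assume "\<epsilon> > 0"
  moreover have "(\<lambda>n. measure P {\<omega>\<in>space P. 1 < \<bar>Y n \<omega>\<bar>}) \<longlonglongrightarrow> 0"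
    using assms by (auto simp: cvg0_def)
  ultimately show "\<exists>C. \<forall>\<^sub>F n in sequentially. measure P {\<omega>\<in>space P. C < \<bar>Y n \<omega>\<bar>} < \<epsilon>"
    by (auto dest: order_tendstoD intro!: exI[of _ 1])
qed

lemma cvg0_cmult: "cvg0 P Y \<Longrightarrow> cvg0 P (\<lambda>n \<omega>. c * Y n \<omega>)"
  using cvg0_mult_bddp[OF _ bddp_const, of Y c] by (simp add: mult.commute)

lemma bddp_cmult: "bddp P Y \<Longrightarrow> bddp P (\<lambda>n \<omega>. c * Y n \<omega>)"
  using bddp_mult[OF bddp_const, of Y c] by simp

lemma cvg0_mult_bddp': "bddp P Z \<Longrightarrow> cvg0 P Y \<Longrightarrow> cvg0 P (\<lambda>n \<omega>. Z n \<omega> * Y n \<omega>)"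
  using cvg0_mult_bddp[of Y Z] by (simp add: mult.commute)

lemma cvg0_neg: "cvg0 P Y \<Longrightarrow> cvg0 P (\<lambda>n \<omega>. - Y n \<omega>)"
  using cvg0_cmult[of Y "-1"] by simp

lemma cvg0_diff: "cvg0 P Y \<Longrightarrow> cvg0 P Z \<Longrightarrow> cvg0 P (\<lambda>n \<omega>. Y n \<omega> - Z n \<omega>)"
  using cvg0_add[OF _ cvg0_neg, of Y Z] by simp

lemma bddp_diff: "bddp P Y \<Longrightarrow> bddp P Z \<Longrightarrow> bddp P (\<lambda>n \<omega>. Y n \<omega> - Z n \<omega>)"
  using bddp_add[OF _ bddp_cmult, of Y Z "-1"] by simp

lemma cvg0_zero: "cvg0 P (\<lambda>n \<omega>. 0)"
  using cvg0_det[of "\<lambda>_. 0"] by simp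

lemma cvg0_sum:
  assumes "finite I" "\<And>j. j \<in> I \<Longrightarrow> cvg0 P (Y j)"
  shows "cvg0 P (\<lambda>n \<omega>. \<Sum>j\<in>I. Y j n \<omega>)"
  using assms by (induction I rule: finite_induct) (auto intro: cvg0_add cvg0_zero)

lemma bddp_sum:
  assumes "finite I" "\<And>j. j \<in> I \<Longrightarrow> bddp P (Y j)"
  shows "bddp P (\<lambda>n \<omega>. \<Sum>j\<in>I. Y j n \<omega>)"
  using assms by (induction I rule: finite_induct) (auto intro: bddp_add bddp_const)

end

context
  fixes P :: "'w measure"
  assumes P: "prob_space P"
begin
lemma cvg0_cong:
  assumes "cvg0 P Y" "\<forall>\<^sub>F n in sequentially. \<forall>\<omega>\<in>space P. Y n \<omega> = Z n \<omega>"
    "\<And>n. Z n \<in> borel_measurable P"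
  shows "cvg0 P Z"
  unfolding cvg0_def
proof safe
  fix \<epsilon> :: real assume "\<epsilon> > 0"
  then have "(\<lambda>n. measure P {\<omega>\<in>space P. \<epsilon> < \<bar>Y n \<omega>\<bar>}) \<longlonglongrightarrow> 0"
    using assms(1) unfolding cvg0_def by blast
  then show "(\<lambda>n. measure P {\<omega>\<in>space P. \<epsilon> < \<bar>Z n \<omega>\<bar>}) \<longlonglongrightarrow> 0"
  proof (rule Lim_transform_eventually)
    show "\<forall>\<^sub>F n in sequentially. measure P {\<omega>\<in>space P. \<epsilon> < \<bar>Y n \<omega>\<bar>} = measure P {\<omega>\<in>space P. \<epsilon> < \<bar>Z n \<omega>\<bar>}"
      using assms(2) proof eventually_elim
      case (elim n)
      then have "{\<omega>\<in>space P. \<epsilon> < \<bar>Y n \<omega>\<bar>} = {\<omega>\<in>space P. \<epsilon> < \<bar>Z n \<omega>\<bar>}" by auto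
      then show ?case by simp
    qed
  qed
qed (use assms(3) in simp)

lemma bddp_cong:
  assumes "bddp P Y" "\<forall>\<^sub>F n in sequentially. \<forall>\<omega>\<in>space P. Y n \<omega> = Z n \<omega>"
    "\<And>n. Z n \<in> borel_measurable P"
  shows "bddp P Z"
  unfolding bddp_def
proof safe
  fix \<epsilon> :: real assume "\<epsilon> > 0"
  then obtain C where C: "\<forall>\<^sub>F n in sequentially. measure P {\<omega>\<in>space P. C < \<bar>Y n \<omega>\<bar>} < \<epsilon>"
    using assms(1) unfolding bddp_def by blast
  show "\<exists>C. \<forall>\<^sub>F n in sequentially. measure P {\<omega>\<in>space P. C < \<bar>Z n \<omega>\<bar>} < \<epsilon>"
  proof (intro exI[of _ C])
    show "\<forall>\<^sub>F n in sequentially. measure P {\<omega>\<in>space P. C < \<bar>Z n \<omega>\<bar>} < \<epsilon>"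
      using C assms(2) proof eventually_elim
      case (elim n)
      then have "{\<omega>\<in>space P. C < \<bar>Y n \<omega>\<bar>} = {\<omega>\<in>space P. C < \<bar>Z n \<omega>\<bar>}" by auto
      then show ?case using elim by simp
    qed
  qed
qed (use assms(3) in simp)

lemma cvg0_imp_o_p:
  assumes "cvg0 P Y" "\<forall>\<^sub>F n in sequentially. \<forall>\<omega>\<in>space P. Y n \<omega> = Z n \<omega>"
  shows "o_p P Z (\<lambda>n. 1)"
  unfolding o_p_def
proof safe
  fix \<epsilon> :: real assume "\<epsilon> > 0"
  then have "(\<lambda>n. measure P {\<omega>\<in>space P. \<epsilon> < \<bar>Y n \<omega>\<bar>}) \<longlonglongrightarrow> 0"
    using assms(1) unfolding cvg0_def by blast
  then show "(\<lambda>n. measure P {\<omega>\<in>space P. \<epsilon> * 1 < norm (Z n \<omega>)}) \<longlonglongrightarrow> 0"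
  proof (rule Lim_transform_eventually)
    show "\<forall>\<^sub>F n in sequentially. measure P {\<omega>\<in>space P. \<epsilon> < \<bar>Y n \<omega>\<bar>} = measure P {\<omega>\<in>space P. \<epsilon> * 1 < norm (Z n \<omega>)}"
      using assms(2) proof eventually_elim
      case (elim n)
      then have "{\<omega>\<in>space P. \<epsilon> < \<bar>Y n \<omega>\<bar>} = {\<omega>\<in>space P. \<epsilon> * 1 < norm (Z n \<omega>)}"
      proof (intro Collect_cong conj_cong refl)
        fix \<omega> assume "\<omega> \<in> space P"
        then have "\<bar>Y n \<omega>\<bar> = norm (Z n \<omega>)" using elim by simp
        then show "(\<epsilon> < \<bar>Y n \<omega>\<bar>) = (\<epsilon> * 1 < norm (Z n \<omega>))" by simp
      qed
      then show ?case by simp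
    qed
  qed
qed

end

lemma abs_mult_le_sq: "\<bar>(a::real) * b\<bar> \<le> a\<^sup>2 + b\<^sup>2"
proof -
  have "0 \<le> (\<bar>a\<bar> - \<bar>b\<bar>)\<^sup>2" by simp
  also have "\<dots> = a\<^sup>2 + b\<^sup>2 - 2 * \<bar>a * b\<bar>"
    unfolding power2_diff by (simp add: abs_mult)
  finally have "2 * \<bar>a * b\<bar> \<le> a\<^sup>2 + b\<^sup>2" by simp
  moreover have "0 \<le> \<bar>a * b\<bar>" by simp
  ultimately show ?thesis by linarith
qed

context
  fixes P :: "'w measure" and M :: "'a measure" and X :: "nat \<Rightarrow> 'w \<Rightarrow> 'a" and q :: "'a \<Rightarrow> real"
  assumes P: "prob_space P"
    and indep: "prob_space.indep_vars P (\<lambda>_. M) X UNIV"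
    and ident: "\<And>t. distr P M (X t) = density M (\<lambda>x. ennreal (q x))"
    and q_meas: "q \<in> borel_measurable M"
    and q_nn: "\<And>x. x \<in> space M \<Longrightarrow> 0 \<le> q x"
begin

lemma X_meas: "X t \<in> measurable P M"
  using indep P by (auto simp: prob_space.indep_vars_def)

lemma h_X_meas: "h \<in> borel_measurable M \<Longrightarrow> (\<lambda>\<omega>. h (X t \<omega>)) \<in> borel_measurable P"
  by (rule measurable_compose[OF X_meas])

lemma transfer:
  assumes h: "h \<in> borel_measurable M" and int: "integrable M (\<lambda>x. q x * h x)"
  shows "integrable P (\<lambda>\<omega>. h (X t \<omega>))" "(\<integral>\<omega>. h (X t \<omega>) \<partial>P) = (\<integral>x. q x * h x \<partial>M)"
proof -
  have nn: "AE x in M. 0 \<le> q x" using q_nn by (auto intro: AE_I2)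
  have "integrable (distr P M (X t)) h"
    unfolding ident using integrable_real_density[OF q_meas nn h] int by simp
  then show "integrable P (\<lambda>\<omega>. h (X t \<omega>))" using integrable_distr_eq[OF X_meas h] by simp
  have "(\<integral>\<omega>. h (X t \<omega>) \<partial>P) = integral\<^sup>L (distr P M (X t)) h"
    using integral_distr[OF X_meas h] by simp
  also have "\<dots> = (\<integral>x. q x * h x \<partial>M)"
    unfolding ident using integral_real_density[OF q_meas nn h] by simp
  finally show "(\<integral>\<omega>. h (X t \<omega>) \<partial>P) = (\<integral>x. q x * h x \<partial>M)" .
qed

lemma indep_pair:
  assumes "s \<noteq> t" and f: "f \<in> borel_measurable M" and g: "g \<in> borel_measurable M"
  shows "prob_space.indep_var P borel (\<lambda>\<omega>. f (X s \<omega>)) borel (\<lambda>\<omega>. g (X t \<omega>))"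
proof -
  have "prob_space.indep_var P
    borel ((\<lambda>y. f (y s)) \<circ> (\<lambda>\<omega>. restrict (\<lambda>i. X i \<omega>) {s}))
    borel ((\<lambda>y. g (y t)) \<circ> (\<lambda>\<omega>. restrict (\<lambda>i. X i \<omega>) {t}))"
    using assms
    by (intro prob_space.indep_var_compose[OF P prob_space.indep_var_restrict[OF P indep]]) auto
  moreover have "((\<lambda>y. f (y s)) \<circ> (\<lambda>\<omega>. restrict (\<lambda>i. X i \<omega>) {s})) = (\<lambda>\<omega>. f (X s \<omega>))"
    "((\<lambda>y. g (y t)) \<circ> (\<lambda>\<omega>. restrict (\<lambda>i. X i \<omega>) {t})) = (\<lambda>\<omega>. g (X t \<omega>))"
    by auto
  ultimately show ?thesis by simp
qed


lemma wlln:
  assumes h: "h \<in> borel_measurable M" and int1: "integrable M (\<lambda>x. q x * h x)"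
    and int2: "integrable M (\<lambda>x. q x * (h x)\<^sup>2)"
  shows "cvg0 P (\<lambda>n \<omega>. (\<Sum>t<n. h (X t \<omega>)) / real n - (\<integral>x. q x * h x \<partial>M))"
proof -
  define \<mu> where "\<mu> = (\<integral>x. q x * h x \<partial>M)"
  define \<sigma> where "\<sigma> = (\<integral>x. q x * (h x)\<^sup>2 \<partial>M)"
  define v where "v = \<sigma> - \<mu>\<^sup>2"
  define Z where "Z t \<omega> = h (X t \<omega>) - \<mu>" for t \<omega>
  have h2: "(\<lambda>x. (h x)\<^sup>2) \<in> borel_measurable M" using h by measurable
  have Zm[measurable]: "Z t \<in> borel_measurable P" for t
    unfolding Z_def using h_X_meas[OF h] by measurable
  have iZ: "integrable P (\<lambda>\<omega>. h (X t \<omega>))" "(\<integral>\<omega>. h (X t \<omega>) \<partial>P) = \<mu>" for t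
    using transfer[OF h int1] unfolding \<mu>_def by auto
  have iZ2: "integrable P (\<lambda>\<omega>. (h (X t \<omega>))\<^sup>2)" "(\<integral>\<omega>. (h (X t \<omega>))\<^sup>2 \<partial>P) = \<sigma>" for t
    using transfer[OF h2 int2] unfolding \<sigma>_def by auto
  have p1: "prob_space.prob P (space P) = 1" using P prob_space.prob_space by blast
  have intZ: "integrable P (Z t)" for t
    unfolding Z_def using iZ(1) P prob_space.finite_measure[OF P] by (intro Bochner_Integration.integrable_diff) (auto simp: finite_measure.integrable_const)
  have EZ: "(\<integral>\<omega>. Z t \<omega> \<partial>P) = 0" for t
    unfolding Z_def using iZ p1 prob_space.finite_measure[OF P]
    by (subst Bochner_Integration.integral_diff) (auto simp: finite_measure.integrable_const)
  have sqZ: "(Z t \<omega>)\<^sup>2 = (h (X t \<omega>))\<^sup>2 - 2 * \<mu> * h (X t \<omega>) + \<mu>\<^sup>2" for t \<omega>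
    unfolding Z_def by (simp add: power2_diff)
  have intZ2: "integrable P (\<lambda>\<omega>. (Z t \<omega>)\<^sup>2)" for t
    unfolding sqZ using iZ(1) iZ2(1) prob_space.finite_measure[OF P]
    by (intro Bochner_Integration.integrable_add Bochner_Integration.integrable_diff)
       (auto simp: finite_measure.integrable_const)
  have EZ2: "(\<integral>\<omega>. (Z t \<omega>)\<^sup>2 \<partial>P) = v" for t
  proof -
    have "(\<integral>\<omega>. (Z t \<omega>)\<^sup>2 \<partial>P) = (\<integral>\<omega>. (h (X t \<omega>))\<^sup>2 - 2 * \<mu> * h (X t \<omega>) \<partial>P) + (\<integral>\<omega>. \<mu>\<^sup>2 \<partial>P)"
      unfolding sqZ using iZ(1) iZ2(1) prob_space.finite_measure[OF P]
      by (subst Bochner_Integration.integral_add) (auto simp: finite_measure.integrable_const)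
    also have "\<dots> = \<sigma> - 2 * \<mu> * \<mu> + \<mu>\<^sup>2"
      using iZ iZ2 p1 by (subst Bochner_Integration.integral_diff) auto
    finally show ?thesis unfolding v_def by (simp add: power2_eq_square)
  qed
  have intZZ: "integrable P (\<lambda>\<omega>. Z s \<omega> * Z t \<omega>)" for s t
  proof (rule Bochner_Integration.integrable_bound)
    show "integrable P (\<lambda>\<omega>. (Z s \<omega>)\<^sup>2 + (Z t \<omega>)\<^sup>2)" using intZ2 by auto
    show "AE \<omega> in P. norm (Z s \<omega> * Z t \<omega>) \<le> norm ((Z s \<omega>)\<^sup>2 + (Z t \<omega>)\<^sup>2)"
      by (intro AE_I2) (simp add: abs_mult_le_sq)
  qed simp
  have EZZ: "(\<integral>\<omega>. Z s \<omega> * Z t \<omega> \<partial>P) = (if s = t then v else 0)" for s t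
  proof (cases "s = t")
    case True then show ?thesis using EZ2[of t] by (simp add: power2_eq_square)
  next
    case False
    have ind: "prob_space.indep_var P borel (Z s) borel (Z t)"
      unfolding Z_def using indep_pair[OF False, of "\<lambda>x. h x - \<mu>" "\<lambda>x. h x - \<mu>"] h by simp
    show ?thesis using prob_space.indep_var_lebesgue_integral[OF P ind intZ intZ] EZ False by simp
  qed
  have ES: "(\<integral>\<omega>. (\<Sum>t<n. Z t \<omega>)\<^sup>2 \<partial>P) = real n * v" for n
  proof -
    have "(\<integral>\<omega>. (\<Sum>t<n. Z t \<omega>)\<^sup>2 \<partial>P) = (\<integral>\<omega>. (\<Sum>s<n. \<Sum>t<n. Z s \<omega> * Z t \<omega>) \<partial>P)"
      by (simp add: power2_eq_square sum_product)
    also have "\<dots> = (\<Sum>s<n. \<Sum>t<n. (\<integral>\<omega>. Z s \<omega> * Z t \<omega> \<partial>P))"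
      using intZZ by (simp add: Bochner_Integration.integral_sum)
    also have "\<dots> = (\<Sum>s<n. v)" by (simp add: EZZ)
    finally show ?thesis by simp
  qed
  have Ymeas: "(\<lambda>\<omega>. (\<Sum>t<n. h (X t \<omega>)) / real n - \<mu>) \<in> borel_measurable P" for n
    using h_X_meas[OF h] by measurable
  show ?thesis
    unfolding cvg0_def \<mu>_def[symmetric]
  proof (intro conjI allI impI Ymeas)
    fix \<epsilon> :: real assume e: "\<epsilon> > 0"
    have bound: "measure P {\<omega>\<in>space P. \<epsilon> < \<bar>(\<Sum>t<n. h (X t \<omega>)) / real n - \<mu>\<bar>} \<le> v / (\<epsilon>\<^sup>2 * real n)"
      if n: "n > 0" for n
    proof -
      have eq: "(\<Sum>t<n. h (X t \<omega>)) / real n - \<mu> = (\<Sum>t<n. Z t \<omega>) / real n" for \<omega>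
        unfolding Z_def using n by (simp add: sum_subtractf field_simps)
      have "measure P {\<omega>\<in>space P. \<epsilon> < \<bar>(\<Sum>t<n. h (X t \<omega>)) / real n - \<mu>\<bar>}
          \<le> measure P {\<omega>\<in>space P. \<epsilon>\<^sup>2 \<le> ((\<Sum>t<n. Z t \<omega>) / real n)\<^sup>2}"
      proof (rule finite_measure.finite_measure_mono[OF prob_space.finite_measure[OF P]])
        show "{\<omega>\<in>space P. \<epsilon> < \<bar>(\<Sum>t<n. h (X t \<omega>)) / real n - \<mu>\<bar>}
          \<subseteq> {\<omega>\<in>space P. \<epsilon>\<^sup>2 \<le> ((\<Sum>t<n. Z t \<omega>) / real n)\<^sup>2}"
        proof safe
          fix \<omega> assume "\<epsilon> < \<bar>(\<Sum>t<n. h (X t \<omega>)) / real n - \<mu>\<bar>"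
          then have "\<epsilon> < \<bar>(\<Sum>t<n. Z t \<omega>) / real n\<bar>" by (simp add: eq)
          then have "\<epsilon>\<^sup>2 \<le> \<bar>(\<Sum>t<n. Z t \<omega>) / real n\<bar>\<^sup>2"
            using e by (intro power_mono) auto
          then show "\<epsilon>\<^sup>2 \<le> ((\<Sum>t<n. Z t \<omega>) / real n)\<^sup>2" by (simp only: power2_abs)
        qed
        show "{\<omega>\<in>space P. \<epsilon>\<^sup>2 \<le> ((\<Sum>t<n. Z t \<omega>) / real n)\<^sup>2} \<in> sets P" by measurable
      qed
      also have "\<dots> \<le> (\<integral>\<omega>. ((\<Sum>t<n. Z t \<omega>) / real n)\<^sup>2 \<partial>P) / \<epsilon>\<^sup>2"
      proof (rule integral_Markov_inequality_measure[where A="space P"])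
        show "integrable P (\<lambda>\<omega>. ((\<Sum>t<n. Z t \<omega>) / real n)\<^sup>2)"
        proof -
          have "integrable P (\<lambda>\<omega>. (\<Sum>s<n. \<Sum>t<n. Z s \<omega> * Z t \<omega>))"
            using intZZ by (intro Bochner_Integration.integrable_sum) auto
          then have "integrable P (\<lambda>\<omega>. (\<Sum>t<n. Z t \<omega>)\<^sup>2 / (real n)\<^sup>2)"
            by (intro integrable_divide) (simp add: power2_eq_square sum_product)
          then show ?thesis by (simp add: power_divide)
        qed
      qed (use e in auto)
      also have "(\<integral>\<omega>. ((\<Sum>t<n. Z t \<omega>) / real n)\<^sup>2 \<partial>P) = (\<integral>\<omega>. (\<Sum>t<n. Z t \<omega>)\<^sup>2 \<partial>P) / (real n)\<^sup>2"
        by (simp add: power_divide)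
      also have "\<dots> = v / real n" using ES n by (simp add: power2_eq_square)
      finally show ?thesis using n e by (simp add: field_simps)
    qed
    show "(\<lambda>n. measure P {\<omega>\<in>space P. \<epsilon> < \<bar>(\<Sum>t<n. h (X t \<omega>)) / real n - \<mu>\<bar>}) \<longlonglongrightarrow> 0"
    proof (rule tendsto_sandwich[of "\<lambda>_. 0" _ _ "\<lambda>n. v / (\<epsilon>\<^sup>2 * real n)"])
      show "\<forall>\<^sub>F n in sequentially. measure P {\<omega>\<in>space P. \<epsilon> < \<bar>(\<Sum>t<n. h (X t \<omega>)) / real n - \<mu>\<bar>} \<le> v / (\<epsilon>\<^sup>2 * real n)"
        using eventually_gt_at_top[of 0] by eventually_elim (use bound in auto)
      show "(\<lambda>n. v / (\<epsilon>\<^sup>2 * real n)) \<longlonglongrightarrow> 0"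
      proof -
        have "(\<lambda>n. (v / \<epsilon>\<^sup>2) * inverse (real n)) \<longlonglongrightarrow> (v / \<epsilon>\<^sup>2) * 0"
          by (intro tendsto_mult tendsto_const lim_inverse_n)
        then show ?thesis by (simp add: field_simps)
      qed
    qed auto
  qed
qed

lemma markov_bddp:
  assumes h: "h \<in> borel_measurable M" and int1: "integrable M (\<lambda>x. q x * \<bar>h x\<bar>)"
  shows "bddp P (\<lambda>n \<omega>. (\<Sum>t<n. h (X t \<omega>)) / real n)"
proof -
  define m where "m = (\<integral>x. q x * \<bar>h x\<bar> \<partial>M)"
  have ha: "(\<lambda>x. \<bar>h x\<bar>) \<in> borel_measurable M" using h by measurable
  have iA: "integrable P (\<lambda>\<omega>. \<bar>h (X t \<omega>)\<bar>)" "(\<integral>\<omega>. \<bar>h (X t \<omega>)\<bar> \<partial>P) = m" for t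
    using transfer[OF ha int1] unfolding m_def by auto
  show ?thesis unfolding bddp_def
  proof (intro conjI allI impI)
    fix n show "(\<lambda>\<omega>. (\<Sum>t<n. h (X t \<omega>)) / real n) \<in> borel_measurable P"
      using h_X_meas[OF h] by measurable
  next
    fix \<epsilon> :: real assume e: "\<epsilon> > 0"
    define C where "C = \<bar>m\<bar> / \<epsilon> + 1"
    have C: "C > 0" "\<bar>m\<bar> / C < \<epsilon>"
    proof -
      show "C > 0" unfolding C_def using e by (simp add: add_nonneg_pos)
      have "\<bar>m\<bar> < \<epsilon> * C" unfolding C_def using e by (simp add: field_simps)
      then show "\<bar>m\<bar> / C < \<epsilon>" using \<open>C > 0\<close> by (simp add: field_simps)
    qed
    have bound: "measure P {\<omega>\<in>space P. C < \<bar>(\<Sum>t<n. h (X t \<omega>)) / real n\<bar>} < \<epsilon>" for n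
    proof -
      have "measure P {\<omega>\<in>space P. C < \<bar>(\<Sum>t<n. h (X t \<omega>)) / real n\<bar>}
          \<le> measure P {\<omega>\<in>space P. C \<le> (\<Sum>t<n. \<bar>h (X t \<omega>)\<bar>) / real n}"
      proof (rule finite_measure.finite_measure_mono[OF prob_space.finite_measure[OF P]])
        show "{\<omega>\<in>space P. C < \<bar>(\<Sum>t<n. h (X t \<omega>)) / real n\<bar>} \<subseteq> {\<omega>\<in>space P. C \<le> (\<Sum>t<n. \<bar>h (X t \<omega>)\<bar>) / real n}"
        proof safe
          fix \<omega> assume a: "C < \<bar>(\<Sum>t<n. h (X t \<omega>)) / real n\<bar>"
          have "\<bar>(\<Sum>t<n. h (X t \<omega>)) / real n\<bar> \<le> (\<Sum>t<n. \<bar>h (X t \<omega>)\<bar>) / real n"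
            by (simp add: abs_divide divide_right_mono sum_abs)
          then show "C \<le> (\<Sum>t<n. \<bar>h (X t \<omega>)\<bar>) / real n" using a by linarith
        qed
        show "{\<omega>\<in>space P. C \<le> (\<Sum>t<n. \<bar>h (X t \<omega>)\<bar>) / real n} \<in> sets P"
          using h_X_meas[OF h] by measurable
      qed
      also have "\<dots> \<le> (\<integral>\<omega>. (\<Sum>t<n. \<bar>h (X t \<omega>)\<bar>) / real n \<partial>P) / C"
        by (rule integral_Markov_inequality_measure[where A="space P"])
           (use iA C in \<open>auto intro!: sum_nonneg divide_nonneg_nonneg\<close>)
      also have "(\<integral>\<omega>. (\<Sum>t<n. \<bar>h (X t \<omega>)\<bar>) / real n \<partial>P) = (if n = 0 then 0 else m)"
        using iA by (simp add: Bochner_Integration.integral_sum)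
      also have "(if n = 0 then 0 else m) / C < \<epsilon>"
      proof (cases "n = 0")
        case False
        have "m / C \<le> \<bar>m\<bar> / C" using C(1) by (intro divide_right_mono) auto
        then show ?thesis using False C(2) by simp
      qed (use e in simp)
      finally show ?thesis .
    qed
    show "\<exists>C. \<forall>\<^sub>F n in sequentially. measure P {\<omega>\<in>space P. C < \<bar>(\<Sum>t<n. h (X t \<omega>)) / real n\<bar>} < \<epsilon>"
      using bound by (intro exI[of _ C] always_eventually allI)
  qed
qed

end

lemma has_partial_exp:
  assumes "has_partial i f v"
  shows "has_partial i (\<lambda>w. exp (f w)) v" "partial i (\<lambda>w. exp (f w)) v = exp (f v) * partial i f v"
  using DERIV_fun_exp[OF has_partial_DERIV[OF assms]] by (auto intro: partial_DERIV_I)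

context
  fixes M :: "'a measure" and p :: "real^'d::finite \<Rightarrow> 'a \<Rightarrow> real" and \<Theta> :: "(real^'d) set"
  assumes model: "stat_model M p \<Theta>"
begin

lemma opn: "open \<Theta>" using model by (simp add: stat_model_def)
lemma ppos: "v \<in> \<Theta> \<Longrightarrow> x \<in> space M \<Longrightarrow> 0 < p v x" using model by (simp add: stat_model_def)
lemma pmeas: "v \<in> \<Theta> \<Longrightarrow> p v \<in> borel_measurable M" using model by (simp add: stat_model_def)
lemma C3: "x \<in> space M \<Longrightarrow> Ck_on 3 \<Theta> (logp p x)" using model by (simp add: stat_model_def)
lemma fC2: "Ck_on 2 \<Theta> (\<lambda>v. fisher M p v $ i $ j)" using model by (simp add: stat_model_def)

lemma m0: "v \<in> \<Theta> \<Longrightarrow> (\<lambda>x. logp p x v) \<in> borel_measurable M"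
  unfolding logp_def using pmeas by measurable

lemma m1: "v \<in> \<Theta> \<Longrightarrow> (\<lambda>x. partial i (logp p x) v) \<in> borel_measurable M"
  using measurable_partial[OF opn, of v "\<lambda>w x. logp p x w" M i] m0 Ck3_D(1)[OF C3]
  by auto

lemma m2: "v \<in> \<Theta> \<Longrightarrow> (\<lambda>x. partial i (partial j (logp p x)) v) \<in> borel_measurable M"
  using measurable_partial[OF opn, of v "\<lambda>w x. partial j (logp p x) w" M i] m1 Ck3_D(2)[OF C3]
  by auto

lemma m3: "v \<in> \<Theta> \<Longrightarrow> (\<lambda>x. partial i (partial j (partial k (logp p x))) v) \<in> borel_measurable M"
  using measurable_partial[OF opn, of v "\<lambda>w x. partial j (partial k (logp p x)) w" M i] m2 Ck3_D(3)[OF C3]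
  by auto

lemma p_exp: "w \<in> \<Theta> \<Longrightarrow> x \<in> space M \<Longrightarrow> p w x = exp (logp p x w)"
  using ppos by (simp add: logp_def)

lemma dp:
  assumes x: "x \<in> space M" and w: "w \<in> \<Theta>"
  shows "has_partial j (\<lambda>w. p w x) w" "partial j (\<lambda>w. p w x) w = p w x * partial j (logp p x) w"
proof -
  have h: "has_partial j (\<lambda>w. exp (logp p x w)) w"
    "partial j (\<lambda>w. exp (logp p x w)) w = exp (logp p x w) * partial j (logp p x) w"
    using has_partial_exp[OF Ck3_D(1)[OF C3[OF x] w]] by auto
  show "has_partial j (\<lambda>w. p w x) w" "partial j (\<lambda>w. p w x) w = p w x * partial j (logp p x) w"
    using has_partial_local[OF opn w _ h(1), of "\<lambda>w. p w x"] h(2) p_exp[OF w x] p_exp x by auto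
qed

lemma ddp:
  assumes x: "x \<in> space M" and v: "v \<in> \<Theta>"
  shows "partial i (partial j (\<lambda>w. p w x)) v
     = p v x * (partial i (logp p x) v * partial j (logp p x) v + partial i (partial j (logp p x)) v)"
proof -
  have h: "has_partial i (\<lambda>w. p w x * partial j (logp p x) w) v"
    "partial i (\<lambda>w. p w x * partial j (logp p x) w) v
       = partial i (\<lambda>w. p w x) v * partial j (logp p x) v + p v x * partial i (partial j (logp p x)) v"
    using has_partial_mult[OF dp(1)[OF x v] Ck3_D(2)[OF C3[OF x] v]] by auto
  have "partial i (partial j (\<lambda>w. p w x)) v = partial i (\<lambda>w. p w x * partial j (logp p x) w) v"
    using has_partial_local[OF opn v _ h(1), of "partial j (\<lambda>w. p w x)"] dp(2)[OF x] by auto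
  then show ?thesis using h(2) dp(2)[OF x v] by (simp add: algebra_simps)
qed

context
  fixes \<theta> assumes th: "\<theta> \<in> \<Theta>"
begin

lemma E1:
  "integrable M (\<lambda>x. p \<theta> x * partial i (logp p x) \<theta>)"
  "(\<integral>x. p \<theta> x * partial i (logp p x) \<theta> \<partial>M) = 0"
proof -
  have i: "integrable M (\<lambda>x. partial i (\<lambda>w. p w x) \<theta>)" "(\<integral>x. partial i (\<lambda>w. p w x) \<theta> \<partial>M) = 0"
    using model th by (auto simp: stat_model_def)
  show "integrable M (\<lambda>x. p \<theta> x * partial i (logp p x) \<theta>)"
    using i(1) Bochner_Integration.integrable_cong[where M=M and N=M and f="\<lambda>x. partial i (\<lambda>w. p w x) \<theta>" and g="\<lambda>x. p \<theta> x * partial i (logp p x) \<theta>"]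
    by (auto simp: dp(2)[OF _ th])
  show "(\<integral>x. p \<theta> x * partial i (logp p x) \<theta> \<partial>M) = 0"
    using i(2) Bochner_Integration.integral_cong[where M=M and N=M and f="\<lambda>x. partial i (\<lambda>w. p w x) \<theta>" and g="\<lambda>x. p \<theta> x * partial i (logp p x) \<theta>"]
    by (auto simp: dp(2)[OF _ th])
qed

lemma S1: "integrable M (\<lambda>x. p \<theta> x * (partial i (logp p x) \<theta>)\<^sup>2)"
  using model th by (auto simp: stat_model_def mult.commute)

lemma prod_int: "integrable M (\<lambda>x. p \<theta> x * (partial i (logp p x) \<theta> * partial j (logp p x) \<theta>))"
proof (rule Bochner_Integration.integrable_bound)
  show "integrable M (\<lambda>x. p \<theta> x * (partial i (logp p x) \<theta>)\<^sup>2 + p \<theta> x * (partial j (logp p x) \<theta>)\<^sup>2)"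
    using S1 by auto
  show "(\<lambda>x. p \<theta> x * (partial i (logp p x) \<theta> * partial j (logp p x) \<theta>)) \<in> borel_measurable M"
    using m1[OF th] pmeas[OF th] by measurable
  show "AE x in M. norm (p \<theta> x * (partial i (logp p x) \<theta> * partial j (logp p x) \<theta>))
      \<le> norm (p \<theta> x * (partial i (logp p x) \<theta>)\<^sup>2 + p \<theta> x * (partial j (logp p x) \<theta>)\<^sup>2)"
  proof (rule AE_I2)
    fix x assume x: "x \<in> space M"
    have pp: "0 < p \<theta> x" using ppos[OF th x] .
    have "\<bar>p \<theta> x * (partial i (logp p x) \<theta> * partial j (logp p x) \<theta>)\<bar>
       = p \<theta> x * \<bar>partial i (logp p x) \<theta> * partial j (logp p x) \<theta>\<bar>" using pp by (simp add: abs_mult)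
    also have "\<dots> \<le> p \<theta> x * ((partial i (logp p x) \<theta>)\<^sup>2 + (partial j (logp p x) \<theta>)\<^sup>2)"
      using pp abs_mult_le_sq by (intro mult_left_mono) auto
    finally show "norm (p \<theta> x * (partial i (logp p x) \<theta> * partial j (logp p x) \<theta>))
      \<le> norm (p \<theta> x * (partial i (logp p x) \<theta>)\<^sup>2 + p \<theta> x * (partial j (logp p x) \<theta>)\<^sup>2)"
      using pp by (simp add: algebra_simps)
  qed
qed

lemma fisher_eq: "fisher M p \<theta> $ i $ j = (\<integral>x. p \<theta> x * (partial i (logp p x) \<theta> * partial j (logp p x) \<theta>) \<partial>M)"
  unfolding fisher_def by (simp add: algebra_simps)

lemma E2:
  "integrable M (\<lambda>x. p \<theta> x * partial i (partial j (logp p x)) \<theta>)"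
  "(\<integral>x. p \<theta> x * partial i (partial j (logp p x)) \<theta> \<partial>M) = - fisher M p \<theta> $ i $ j"
proof -
  have i: "integrable M (\<lambda>x. partial i (partial j (\<lambda>w. p w x)) \<theta>)" "(\<integral>x. partial i (partial j (\<lambda>w. p w x)) \<theta> \<partial>M) = 0"
    using model th by (auto simp: stat_model_def)
  have eq: "x \<in> space M \<Longrightarrow> p \<theta> x * partial i (partial j (logp p x)) \<theta>
     = partial i (partial j (\<lambda>w. p w x)) \<theta> - p \<theta> x * (partial i (logp p x) \<theta> * partial j (logp p x) \<theta>)" for x
    using ddp[OF _ th] by (simp add: algebra_simps)
  have i2: "integrable M (\<lambda>x. partial i (partial j (\<lambda>w. p w x)) \<theta> - p \<theta> x * (partial i (logp p x) \<theta> * partial j (logp p x) \<theta>))"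
    using i(1) prod_int by auto
  show "integrable M (\<lambda>x. p \<theta> x * partial i (partial j (logp p x)) \<theta>)"
  proof -
    have "integrable M (\<lambda>x. p \<theta> x * partial i (partial j (logp p x)) \<theta>) \<longleftrightarrow>
      integrable M (\<lambda>x. partial i (partial j (\<lambda>w. p w x)) \<theta> - p \<theta> x * (partial i (logp p x) \<theta> * partial j (logp p x) \<theta>))"
      by (rule Bochner_Integration.integrable_cong) (simp_all only: eq)
    then show ?thesis using i2 by blast
  qed
  have "(\<integral>x. p \<theta> x * partial i (partial j (logp p x)) \<theta> \<partial>M)
     = (\<integral>x. partial i (partial j (\<lambda>w. p w x)) \<theta> - p \<theta> x * (partial i (logp p x) \<theta> * partial j (logp p x) \<theta>) \<partial>M)"
    by (rule Bochner_Integration.integral_cong) (simp_all only: eq)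
  also have "\<dots> = - fisher M p \<theta> $ i $ j"
    using i prod_int by (simp add: fisher_eq)
  finally show "(\<integral>x. p \<theta> x * partial i (partial j (logp p x)) \<theta> \<partial>M) = - fisher M p \<theta> $ i $ j" .
qed

end

lemma mc_N:
  assumes "moment_conditions M p \<Theta> \<theta>"
  obtains N where "\<theta> \<in> N"
    "\<And>i j. (SUP v\<in>N. \<integral>\<^sup>+ x. ennreal ((partial i (partial j (logp p x)) v)\<^sup>2 * p v x) \<partial>M) < \<infinity>"
    "\<And>i j k. (SUP v\<in>N. \<integral>\<^sup>+ x. ennreal (\<bar>partial i (partial j (partial k (logp p x))) v\<bar> * p v x) \<partial>M) < \<infinity>"
proof -
  obtain N where N: "\<theta> \<in> interior N"
    "\<forall>i j. (SUP v\<in>N. \<integral>\<^sup>+ x. ennreal ((partial i (partial j (logp p x)) v)\<^sup>2 * p v x) \<partial>M) < \<infinity>"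
    "\<forall>i j k. (SUP v\<in>N. \<integral>\<^sup>+ x. ennreal (\<bar>partial i (partial j (partial k (logp p x))) v\<bar> * p v x) \<partial>M) < \<infinity>"
    using assms unfolding moment_conditions_def by blast
  show ?thesis
  proof (rule that)
    show "\<theta> \<in> N" using N(1) interior_subset by blast
  qed (use N in blast)+
qed

lemma S2:
  assumes mc: "moment_conditions M p \<Theta> \<theta>" and th: "\<theta> \<in> \<Theta>"
  shows "integrable M (\<lambda>x. p \<theta> x * (partial i (partial j (logp p x)) \<theta>)\<^sup>2)"
proof -
  obtain N where N0: "\<theta> \<in> N"
    "\<And>i j. (SUP v\<in>N. \<integral>\<^sup>+ x. ennreal ((partial i (partial j (logp p x)) v)\<^sup>2 * p v x) \<partial>M) < \<infinity>"
    "\<And>i j k. (SUP v\<in>N. \<integral>\<^sup>+ x. ennreal (\<bar>partial i (partial j (partial k (logp p x))) v\<bar> * p v x) \<partial>M) < \<infinity>"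
    by (rule mc_N[OF mc]) iprover
  note N = N0(1) N0(2)[of i j] N0(3)[of i j k]
  have "(\<integral>\<^sup>+ x. ennreal ((partial i (partial j (logp p x)) \<theta>)\<^sup>2 * p \<theta> x) \<partial>M) < \<infinity>"
    by (rule le_less_trans[OF SUP_upper[OF N(1), of "\<lambda>v. \<integral>\<^sup>+ x. ennreal ((partial i (partial j (logp p x)) v)\<^sup>2 * p v x) \<partial>M"] N(2)])
  moreover have "(\<lambda>x. ennreal ((partial i (partial j (logp p x)) \<theta>)\<^sup>2 * p \<theta> x)) = (\<lambda>x. ennreal (p \<theta> x * (partial i (partial j (logp p x)) \<theta>)\<^sup>2))"
    by (intro ext arg_cong[where f=ennreal] mult.commute)
  ultimately have "(\<integral>\<^sup>+ x. ennreal (p \<theta> x * (partial i (partial j (logp p x)) \<theta>)\<^sup>2) \<partial>M) < \<infinity>"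
    by simp
  moreover have [measurable]: "(\<lambda>x. partial i (partial j (logp p x)) \<theta>) \<in> borel_measurable M" "p \<theta> \<in> borel_measurable M"
    using m2[OF th] pmeas[OF th] by auto
  ultimately show ?thesis
  proof (intro integrableI_nonneg AE_I2)
    fix x assume "x \<in> space M" then show "0 \<le> p \<theta> x * (partial i (partial j (logp p x)) \<theta>)\<^sup>2" using ppos[OF th] by (simp add: less_imp_le)
  qed measurable
qed

lemma T1:
  assumes mc: "moment_conditions M p \<Theta> \<theta>" and th: "\<theta> \<in> \<Theta>"
  shows "integrable M (\<lambda>x. p \<theta> x * \<bar>partial i (partial j (partial k (logp p x))) \<theta>\<bar>)"
proof -
  obtain N where N0: "\<theta> \<in> N"
    "\<And>i j. (SUP v\<in>N. \<integral>\<^sup>+ x. ennreal ((partial i (partial j (logp p x)) v)\<^sup>2 * p v x) \<partial>M) < \<infinity>"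
    "\<And>i j k. (SUP v\<in>N. \<integral>\<^sup>+ x. ennreal (\<bar>partial i (partial j (partial k (logp p x))) v\<bar> * p v x) \<partial>M) < \<infinity>"
    by (rule mc_N[OF mc]) iprover
  note N = N0(1) N0(3)[of i j k] N0(2)[of i j]
  have "(\<integral>\<^sup>+ x. ennreal (\<bar>partial i (partial j (partial k (logp p x))) \<theta>\<bar> * p \<theta> x) \<partial>M) < \<infinity>"
    by (rule le_less_trans[OF SUP_upper[OF N(1), of "\<lambda>v. \<integral>\<^sup>+ x. ennreal (\<bar>partial i (partial j (partial k (logp p x))) v\<bar> * p v x) \<partial>M"] N(2)])
  moreover have "(\<lambda>x. ennreal (\<bar>partial i (partial j (partial k (logp p x))) \<theta>\<bar> * p \<theta> x)) = (\<lambda>x. ennreal (p \<theta> x * \<bar>partial i (partial j (partial k (logp p x))) \<theta>\<bar>))"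
    by (intro ext arg_cong[where f=ennreal] mult.commute)
  ultimately have "(\<integral>\<^sup>+ x. ennreal (p \<theta> x * \<bar>partial i (partial j (partial k (logp p x))) \<theta>\<bar>) \<partial>M) < \<infinity>"
    by simp
  moreover have [measurable]: "(\<lambda>x. partial i (partial j (partial k (logp p x))) \<theta>) \<in> borel_measurable M" "p \<theta> \<in> borel_measurable M"
    using m3[OF th] pmeas[OF th] by auto
  ultimately show ?thesis
  proof (intro integrableI_nonneg AE_I2)
    fix x assume "x \<in> space M" then show "0 \<le> p \<theta> x * \<bar>partial i (partial j (partial k (logp p x))) \<theta>\<bar>" using ppos[OF th] by (simp add: less_imp_le)
  qed measurable
qed

end

lemma has_partial_prod:
  assumes "finite T" "\<And>t. t \<in> T \<Longrightarrow> has_partial i (f t) v"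
  shows "has_partial i (\<lambda>w. \<Prod>t\<in>T. f t w) v"
  using assms
proof (induction T rule: finite_induct)
  case empty then show ?case using has_partial_const(1) by simp
next
  case (insert a T)
  then show ?case using has_partial_mult(1)[of i "f a" v "\<lambda>w. \<Prod>t\<in>T. f t w"] by simp
qed

lemma has_partial_divide:
  assumes "has_partial i f v" "has_partial i g v" "g v \<noteq> 0"
  shows "has_partial i (\<lambda>w. f w / g w) v"
  using DERIV_divide[OF has_partial_DERIV[OF assms(1)] has_partial_DERIV[OF assms(2)]] assms(3)
  by (auto intro: partial_DERIV_I)

lemma has_partial_det:
  fixes F :: "real^'d::finite \<Rightarrow> real^'n::finite^'n"
  assumes "\<And>a b. has_partial i (\<lambda>w. F w $ a $ b) v"
  shows "has_partial i (\<lambda>w. det (F w)) v"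
  unfolding det_def
  by (intro has_partial_sum(1) has_partial_cmult(1) has_partial_prod assms finite_permutations) auto

lemma has_partial_line_local:
  assumes "\<forall>\<^sub>F t in nhds 0. f (v + t *\<^sub>R axis i 1) = g (v + t *\<^sub>R axis i 1)" "has_partial i g v"
  shows "has_partial i f v" "partial i f v = partial i g v"
proof -
  show "partial i f v = partial i g v"
    unfolding partial_def by (rule deriv_cong_ev[OF assms(1) refl])
  show "has_partial i f v"
    using assms(2) unfolding has_partial_def real_differentiable_def
    using DERIV_cong_ev[OF refl assms(1) refl] by blast
qed

lemma has_partial_ev_ne:
  assumes "has_partial i f v" "f v \<noteq> 0"
  shows "\<forall>\<^sub>F t in nhds 0. f (v + t *\<^sub>R axis i 1) \<noteq> 0"
proof -
  have "isCont (\<lambda>t. f (v + t *\<^sub>R axis i 1)) 0"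
    using DERIV_isCont[OF has_partial_DERIV[OF assms(1)]] .
  then have "((\<lambda>t. f (v + t *\<^sub>R axis i 1)) \<longlongrightarrow> f v) (at 0)"
    unfolding isCont_def by simp
  then have "\<forall>\<^sub>F t in at 0. f (v + t *\<^sub>R axis i 1) \<noteq> 0"
    using tendsto_imp_eventually_ne assms(2) by blast
  then show ?thesis unfolding eventually_nhds_conv_at using assms(2) by simp
qed

lemma matrix_inv_cramer:
  fixes A :: "real^'n::finite^'n"
  assumes "det A \<noteq> 0"
  shows "matrix_inv A $ m $ l = det (\<chi> a b. if b = m then axis l 1 $ a else A $ a $ b) / det A"
proof -
  have inv: "invertible A" using assms invertible_det_nz by blast
  then have AB: "A ** matrix_inv A = mat 1"
    unfolding invertible_def matrix_inv_def by (rule someI2_ex) auto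
  have "A *v (matrix_inv A *v axis l 1) = axis l 1"
    by (simp add: matrix_vector_mul_assoc AB)
  then have "matrix_inv A *v axis l 1 = (\<chi> k. det (\<chi> a b. if b = k then axis l 1 $ a else A $ a $ b) / det A)"
    using cramer[OF assms] by blast
  then have "(matrix_inv A *v axis l 1) $ m = det (\<chi> a b. if b = m then axis l 1 $ a else A $ a $ b) / det A"
    by simp
  moreover have "(matrix_inv A *v axis l 1) $ m = matrix_inv A $ m $ l"
  proof -
    have "(matrix_inv A *v axis l 1) $ m = (\<Sum>j\<in>UNIV. if j = l then matrix_inv A $ m $ j else 0)"
    proof -
      have e: "\<And>j. matrix_inv A $ m $ j * (if j = l then 1 else 0) = (if j = l then matrix_inv A $ m $ j else 0)"
        by simp
      show ?thesis by (simp add: matrix_vector_mult_def axis_def e del: mult_if_delta)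
    qed
    then show ?thesis by simp
  qed
  ultimately show ?thesis by simp
qed

lemma has_partial_matrix_inv:
  fixes G :: "real^'d::finite \<Rightarrow> real^'n::finite^'n"
  assumes G: "\<And>a b. has_partial k (\<lambda>w. G w $ a $ b) v" and d: "det (G v) \<noteq> 0"
  shows "has_partial k (\<lambda>w. matrix_inv (G w) $ m $ l) v"
proof -
  have hd: "has_partial k (\<lambda>w. det (G w)) v" by (rule has_partial_det[OF G])
  have hn: "has_partial k (\<lambda>w. det (\<chi> a b. if b = m then axis l 1 $ a else G w $ a $ b)) v"
  proof (rule has_partial_det)
    fix a b show "has_partial k (\<lambda>w. (\<chi> a b. if b = m then axis l 1 $ a else G w $ a $ b) $ a $ b) v"
      by (cases "b = m") (simp_all add: G has_partial_const(1))
  qed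
  have hq: "has_partial k (\<lambda>w. det (\<chi> a b. if b = m then axis l 1 $ a else G w $ a $ b) / det (G w)) v"
    by (rule has_partial_divide[OF hn hd d])
  have ev: "\<forall>\<^sub>F t in nhds 0. matrix_inv (G (v + t *\<^sub>R axis k 1)) $ m $ l
      = det (\<chi> a b. if b = m then axis l 1 $ a else G (v + t *\<^sub>R axis k 1) $ a $ b) / det (G (v + t *\<^sub>R axis k 1))"
    using has_partial_ev_ne[OF hd d] by eventually_elim (rule matrix_inv_cramer)
  show ?thesis by (rule has_partial_line_local(1)[OF ev hq])
qed

lemma lambda_min_invertible:
  fixes G :: "real^'n::finite^'n"
  assumes "lambda_min G > 0"
  shows "invertible G"
proof (rule ccontr)
  assume ni: "\<not> invertible G"
  then have "\<not> (\<forall>x. G *v x = 0 \<longrightarrow> x = 0)"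
    using invertible_left_inverse matrix_left_invertible_ker by blast
  then obtain x where x: "G *v x = 0" "x \<noteq> 0" by blast
  define u where "u = x /\<^sub>R norm x"
  have u: "norm u = 1" "G *v u = 0" using x unfolding u_def
    by (auto simp: matrix_vector_mult_scaleR)
  obtain K where K: "\<And>y. norm (G *v y) \<le> norm y * K"
    using bounded_linear.bounded[OF matrix_vector_mul_bounded_linear[of G]] by blast
  have bdd: "bdd_below ((\<lambda>v. v \<bullet> (G *v v)) ` {v. norm v = 1})"
  proof (rule bdd_belowI2[of _ "- K"])
    fix v :: "real^'n" assume "v \<in> {v. norm v = 1}"
    then have "\<bar>v \<bullet> (G *v v)\<bar> \<le> K" using Cauchy_Schwarz_ineq2[of v "G *v v"] K[of v] by simp
    then show "- K \<le> v \<bullet> (G *v v)" by linarith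
  qed
  have "lambda_min G \<le> u \<bullet> (G *v u)"
    unfolding lambda_min_def by (rule cINF_lower[OF bdd]) (use u in simp)
  also have "\<dots> = 0" using u by simp
  finally show False using assms by simp
qed

lemma vec_nth_meas:
  fixes V :: "'w \<Rightarrow> real^'d::finite"
  assumes "V \<in> borel_measurable P"
  shows "(\<lambda>\<omega>. V \<omega> $ j) \<in> borel_measurable P"
proof -
  have "(\<lambda>\<omega>. V \<omega> \<bullet> axis j 1) \<in> borel_measurable P"
    using assms borel_measurable_euclidean_space[of V P] by (auto simp: cart_eq_inner_axis[symmetric] Basis_vec_def)
  then show ?thesis by (simp add: inner_axis)
qed

lemma vec_meas_from_nth:
  fixes V :: "'w \<Rightarrow> real^'d::finite"
  assumes "\<And>j. (\<lambda>\<omega>. V \<omega> $ j) \<in> borel_measurable P"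
  shows "V \<in> borel_measurable P"
  unfolding borel_measurable_euclidean_space[of V P]
  using assms by (auto simp: Basis_vec_def inner_axis)

lemma o_p_scaled_gen:
  fixes V :: "nat \<Rightarrow> 'w \<Rightarrow> 'b::real_normed_vector"
  assumes P: "prob_space P" and op: "o_p P V r" and Vm: "\<And>n. V n \<in> borel_measurable P"
    and Fm: "\<And>n. (\<lambda>\<omega>. F (V n \<omega>)) \<in> borel_measurable P"
    and F: "\<And>x. \<bar>F x\<bar> \<le> norm x" and r: "\<forall>\<^sub>F n in sequentially. r n > 0"
  shows "cvg0 P (\<lambda>n \<omega>. F (V n \<omega>) / r n)"
  unfolding cvg0_def
proof (intro conjI allI impI)
  fix n show "(\<lambda>\<omega>. F (V n \<omega>) / r n) \<in> borel_measurable P" using Fm by measurable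
next
  fix \<epsilon> :: real assume e: "\<epsilon> > 0"
  have l: "(\<lambda>n. measure P {\<omega>\<in>space P. \<epsilon> * r n < norm (V n \<omega>)}) \<longlonglongrightarrow> 0"
    using op e unfolding o_p_def by blast
  have le: "measure P {\<omega>\<in>space P. \<epsilon> < \<bar>F (V n \<omega>) / r n\<bar>} \<le> measure P {\<omega>\<in>space P. \<epsilon> * r n < norm (V n \<omega>)}"
    if rn: "r n > 0" for n
  proof (rule finite_measure.finite_measure_mono[OF prob_space.finite_measure[OF P]])
    show "{\<omega>\<in>space P. \<epsilon> < \<bar>F (V n \<omega>) / r n\<bar>} \<subseteq> {\<omega>\<in>space P. \<epsilon> * r n < norm (V n \<omega>)}"
    proof safe
      fix \<omega> assume "\<epsilon> < \<bar>F (V n \<omega>) / r n\<bar>"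
      then have "\<epsilon> * r n < \<bar>F (V n \<omega>)\<bar>" using rn by (simp add: abs_divide field_simps)
      then show "\<epsilon> * r n < norm (V n \<omega>)" using F[of "V n \<omega>"] by linarith
    qed
    show "{\<omega>\<in>space P. \<epsilon> * r n < norm (V n \<omega>)} \<in> sets P" using Vm[of n] by measurable
  qed
  show "(\<lambda>n. measure P {\<omega>\<in>space P. \<epsilon> < \<bar>F (V n \<omega>) / r n\<bar>}) \<longlonglongrightarrow> 0"
  proof (rule tendsto_sandwich[OF _ _ tendsto_const l])
    show "\<forall>\<^sub>F n in sequentially. measure P {\<omega>\<in>space P. \<epsilon> < \<bar>F (V n \<omega>) / r n\<bar>} \<le> measure P {\<omega>\<in>space P. \<epsilon> * r n < norm (V n \<omega>)}"
      using r by eventually_elim (rule le)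
  qed simp
qed

lemma O_p1_coord:
  fixes V :: "nat \<Rightarrow> 'w \<Rightarrow> real^'d::finite"
  assumes P: "prob_space P" and op: "O_p1 P V" and Vm: "\<And>n. V n \<in> borel_measurable P"
  shows "bddp P (\<lambda>n \<omega>. V n \<omega> $ j)"
  unfolding bddp_def
proof (intro conjI allI impI)
  fix n show "(\<lambda>\<omega>. V n \<omega> $ j) \<in> borel_measurable P" using vec_nth_meas[OF Vm] .
next
  fix \<epsilon> :: real assume e: "\<epsilon> > 0"
  then obtain C where C: "\<forall>\<^sub>F n in sequentially. measure P {\<omega>\<in>space P. C < norm (V n \<omega>)} < \<epsilon>"
    using op unfolding O_p1_def by blast
  have le: "measure P {\<omega>\<in>space P. C < \<bar>V n \<omega> $ j\<bar>} \<le> measure P {\<omega>\<in>space P. C < norm (V n \<omega>)}" for n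
  proof (rule finite_measure.finite_measure_mono[OF prob_space.finite_measure[OF P]])
    show "{\<omega>\<in>space P. C < \<bar>V n \<omega> $ j\<bar>} \<subseteq> {\<omega>\<in>space P. C < norm (V n \<omega>)}"
      using component_le_norm_cart[of "V n _" j] by (auto intro: less_le_trans)
    show "{\<omega>\<in>space P. C < norm (V n \<omega>)} \<in> sets P" using Vm[of n] by measurable
  qed
  show "\<exists>C. \<forall>\<^sub>F n in sequentially. measure P {\<omega>\<in>space P. C < \<bar>V n \<omega> $ j\<bar>} < \<epsilon>"
  proof (intro exI[of _ C])
    show "\<forall>\<^sub>F n in sequentially. measure P {\<omega>\<in>space P. C < \<bar>V n \<omega> $ j\<bar>} < \<epsilon>"
      using C proof eventually_elim
      case (elim n) then show ?case using le[of n] by linarith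
    qed
  qed
qed

lemma cvg0_eq:
  assumes P: "prob_space P" and Y: "cvg0 P Y" and eq: "\<And>n \<omega>. \<omega> \<in> space P \<Longrightarrow> Y n \<omega> = Z n \<omega>"
  shows "cvg0 P Z"
proof (rule cvg0_cong[OF P Y])
  show "\<forall>\<^sub>F n in sequentially. \<forall>\<omega>\<in>space P. Y n \<omega> = Z n \<omega>" using eq by simp
  fix n show "Z n \<in> borel_measurable P"
    using cvg0_meas[OF P Y, of n] measurable_cong[of P "Y n" "Z n"] eq by simp
qed

lemma bddp_eq:
  assumes P: "prob_space P" and Y: "bddp P Y" and eq: "\<And>n \<omega>. \<omega> \<in> space P \<Longrightarrow> Y n \<omega> = Z n \<omega>"
  shows "bddp P Z"
proof (rule bddp_cong[OF P Y])
  show "\<forall>\<^sub>F n in sequentially. \<forall>\<omega>\<in>space P. Y n \<omega> = Z n \<omega>" using eq by simp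
  fix n show "Z n \<in> borel_measurable P"
    using bddp_meas[OF P Y, of n] measurable_cong[of P "Y n" "Z n"] eq by simp
qed

lemma partial_covHess:
  assumes h1: "has_partial k (partial i (partial j L)) v" and h2: "\<And>m. has_partial k (partial m L) v"
    and h3: "\<And>m. has_partial k (christoffel M p m i j) v"
  shows "partial k (covHess M p L i j) v = partial k (partial i (partial j L)) v
     - (\<Sum>m\<in>UNIV. partial k (christoffel M p m i j) v * partial m L v + christoffel M p m i j v * partial k (partial m L) v)"
proof -
  have eq: "covHess M p L i j = (\<lambda>v. partial i (partial j L) v - (\<Sum>m\<in>UNIV. christoffel M p m i j v * partial m L v))"
    by (rule ext) (simp add: covHess_def)
  have hm: "has_partial k (\<lambda>w. christoffel M p m i j w * partial m L w) v"
    "partial k (\<lambda>w. christoffel M p m i j w * partial m L w) v = partial k (christoffel M p m i j) v * partial m L v + christoffel M p m i j v * partial k (partial m L) v" for m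
    using has_partial_mult[OF h3 h2, of m m] by auto
  have hs: "has_partial k (\<lambda>w. \<Sum>m\<in>UNIV. christoffel M p m i j w * partial m L w) v"
    "partial k (\<lambda>w. \<Sum>m\<in>UNIV. christoffel M p m i j w * partial m L w) v = (\<Sum>m\<in>UNIV. partial k (christoffel M p m i j) v * partial m L v + christoffel M p m i j v * partial k (partial m L) v)"
    using has_partial_sum[of UNIV k "\<lambda>m w. christoffel M p m i j w * partial m L w" v] hm by auto
  show ?thesis unfolding eq using has_partial_diff[OF h1 hs(1)] hs(2) by simp
qed

context
  fixes M :: "'a measure" and p :: "real^'d::finite \<Rightarrow> 'a \<Rightarrow> real" and \<Theta> :: "(real^'d) set"
    and \<theta> :: "real^'d"
  assumes model: "stat_model M p \<Theta>" and th: "\<theta> \<in> \<Theta>" and dt: "det (fisher M p \<theta>) \<noteq> 0"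
begin

lemma christoffel_has_partial: "has_partial k (christoffel M p m i j) \<theta>"
proof -
  have G: "has_partial k (\<lambda>w. fisher M p w $ a $ b) \<theta>" for a b
    using Ck2_D(1)[OF fC2[OF model] th] .
  have G2: "has_partial k (partial a (\<lambda>w. fisher M p w $ b $ c)) \<theta>" for a b c
    using Ck2_D(2)[OF fC2[OF model] th] .
  have I: "has_partial k (\<lambda>w. fisher_inv M p w $ m $ l) \<theta>" for l
    unfolding fisher_inv_def by (rule has_partial_matrix_inv[OF G dt])
  have eq: "christoffel M p m i j = (\<lambda>v. (1/2) * (\<Sum>l\<in>UNIV. fisher_inv M p v $ m $ l *
      (partial i (\<lambda>w. fisher M p w $ j $ l) v + partial j (\<lambda>w. fisher M p w $ i $ l) v
       - partial l (\<lambda>w. fisher M p w $ i $ j) v)))"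
    by (rule ext) (simp add: christoffel_def)
  show ?thesis unfolding eq
    by (intro has_partial_cmult(1) has_partial_sum(1) has_partial_mult(1) has_partial_add(1) has_partial_diff(1) I G2) auto
qed

end

lemma key_identity:
  fixes g gi :: "real^'d::finite^'d" and A B Dl U :: "real^'d" and Hs :: "'d \<Rightarrow> 'd \<Rightarrow> real"
    and C :: "'d \<Rightarrow> 'd \<Rightarrow> 'd \<Rightarrow> real" and n :: nat
  assumes n: "n > 0" and ggi: "g ** gi = mat 1"
  shows "(g *v B) $ i - (\<Sum>j\<in>UNIV. (1 / sqrt (real n)) * (Hs i j + real n * g$i$j) * A$j)
      - (1/2) * (\<Sum>j\<in>UNIV. \<Sum>k\<in>UNIV. (1 / real n) * C i j k * A$j * A$k)
   = - (U$i + (\<Sum>j\<in>UNIV. Hs i j * Dl$j) + (1/2) * (\<Sum>j\<in>UNIV. \<Sum>k\<in>UNIV. C i j k * Dl$j * Dl$k))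
     - (\<Sum>j\<in>UNIV. g$i$j * ((A - (1 / sqrt (real n)) *\<^sub>R (gi *v U))$j / (1 / sqrt (real n))))
     + (\<Sum>j\<in>UNIV. (Hs i j / real n + g$i$j) * B$j)
     + (\<Sum>j\<in>UNIV. (Hs i j / real n) * ((Dl - (1 / sqrt (real n)) *\<^sub>R A - (1 / real n) *\<^sub>R B)$j / (1 / real n)))
     + (1/2) * (\<Sum>j\<in>UNIV. \<Sum>k\<in>UNIV. (C i j k / real n) * (real n * Dl$j * Dl$k - A$j * A$k))"
proof -
  define s where "s = sqrt (real n)"
  have s: "s > 0" "s * s = real n" using n unfolding s_def by (auto simp: real_sqrt_mult_self)
  have nn: "real n > 0" using n by simp
  have gU: "(\<Sum>j\<in>UNIV. g$i$j * (gi *v U)$j) = U$i"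
  proof -
    have "(\<Sum>j\<in>UNIV. g$i$j * (gi *v U)$j) = (g *v (gi *v U)) $ i" by (simp add: matrix_vector_mult_def)
    also have "\<dots> = U $ i" by (simp add: matrix_vector_mul_assoc ggi)
    finally show ?thesis .
  qed
  have t1: "(\<Sum>j\<in>UNIV. g$i$j * ((A - (1 / s) *\<^sub>R (gi *v U))$j / (1 / s))) = s * (\<Sum>j\<in>UNIV. g$i$j * A$j) - U$i"
  proof -
    have "(\<Sum>j\<in>UNIV. g$i$j * ((A - (1 / s) *\<^sub>R (gi *v U))$j / (1 / s)))
        = (\<Sum>j\<in>UNIV. s * (g$i$j * A$j) - g$i$j * (gi *v U)$j)"
      using s by (intro sum.cong refl) (simp add: field_simps)
    also have "\<dots> = s * (\<Sum>j\<in>UNIV. g$i$j * A$j) - U$i"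
      by (simp add: sum_subtractf sum_distrib_left gU)
    finally show ?thesis .
  qed
  define f1 where "f1 j = (Hs i j / real n + g$i$j) * B$j
      + (Hs i j / real n) * ((Dl - (1 / s) *\<^sub>R A - (1 / real n) *\<^sub>R B)$j / (1 / real n))
      - Hs i j * Dl$j - s * (g$i$j * A$j)" for j
  have f1: "f1 j = g$i$j * B$j - (1 / s) * (Hs i j + real n * g$i$j) * A$j" for j
  proof -
    have "real n / s = s" using s by (simp add: field_simps)
    then show ?thesis unfolding f1_def using s nn by (simp add: field_simps)
  qed
  define f2 where "f2 j k = (C i j k / real n) * (real n * Dl$j * Dl$k - A$j * A$k) - C i j k * Dl$j * Dl$k" for j k
  have f2: "f2 j k = - ((1 / real n) * C i j k * A$j * A$k)" for j k
    unfolding f2_def using nn by (simp add: field_simps)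
  have R: "- (U$i + (\<Sum>j\<in>UNIV. Hs i j * Dl$j) + (1/2) * (\<Sum>j\<in>UNIV. \<Sum>k\<in>UNIV. C i j k * Dl$j * Dl$k))
     - (\<Sum>j\<in>UNIV. g$i$j * ((A - (1 / s) *\<^sub>R (gi *v U))$j / (1 / s)))
     + (\<Sum>j\<in>UNIV. (Hs i j / real n + g$i$j) * B$j)
     + (\<Sum>j\<in>UNIV. (Hs i j / real n) * ((Dl - (1 / s) *\<^sub>R A - (1 / real n) *\<^sub>R B)$j / (1 / real n)))
     + (1/2) * (\<Sum>j\<in>UNIV. \<Sum>k\<in>UNIV. (C i j k / real n) * (real n * Dl$j * Dl$k - A$j * A$k))
     = (\<Sum>j\<in>UNIV. f1 j) + (1/2) * (\<Sum>j\<in>UNIV. \<Sum>k\<in>UNIV. f2 j k)"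
    unfolding t1 f1_def f2_def
    by (simp add: sum.distrib sum_subtractf sum_distrib_left algebra_simps)
  have L: "(\<Sum>j\<in>UNIV. f1 j) + (1/2) * (\<Sum>j\<in>UNIV. \<Sum>k\<in>UNIV. f2 j k)
     = (g *v B) $ i - (\<Sum>j\<in>UNIV. (1 / s) * (Hs i j + real n * g$i$j) * A$j)
      - (1/2) * (\<Sum>j\<in>UNIV. \<Sum>k\<in>UNIV. (1 / real n) * C i j k * A$j * A$k)"
    unfolding f1 f2 by (simp add: matrix_vector_mult_def sum_subtractf sum_negf)
  show ?thesis using R L unfolding s_def by simp
qed

lemma W_ident:
  fixes s N a b d e x y :: real
  assumes s: "s > 0" "s * s = N"
  shows "N*d*e - a*b = (1/s)*(a*(y + N*(e - b/s - y/N)) + (x + N*(d - a/s - x/N))*b)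
     + (1/N)*((x + N*(d - a/s - x/N))*(y + N*(e - b/s - y/N)))"
proof -
  have N: "N > 0" using s by (metis mult_pos_pos)
  have "x + N*(d - a/s - x/N) = N*d - s*a" using s N by (simp add: field_simps)
  moreover have "y + N*(e - b/s - y/N) = N*e - s*b" using s N by (simp add: field_simps)
  ultimately show ?thesis using s N by (simp add: field_simps)
qed

lemma W_ident':
  fixes s N a b d e x y :: real
  assumes s: "s > 0" "s * s = N"
  shows "(1/s)*(a*(y + (e - (1/s)*b - (1/N)*y)/(1/N)) + (x + (d - (1/s)*a - (1/N)*x)/(1/N))*b)
     + (1/N)*((x + (d - (1/s)*a - (1/N)*x)/(1/N)) * (y + (e - (1/s)*b - (1/N)*y)/(1/N))) = N*d*e - a*b"
proof -
  have N: "N > 0" using s by (metis mult_pos_pos)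
  have 1: "(e - (1/s)*b - (1/N)*y)/(1/N) = N*(e - b/s - y/N)" using N by simp
  have 2: "(d - (1/s)*a - (1/N)*x)/(1/N) = N*(d - a/s - x/N)" using N by simp
  show ?thesis unfolding 1 2 using W_ident[OF s, where a=a and b=b and d=d and e=e and x=x and y=y] by simp
qed

theorem mainTheorem7:
  fixes M :: "'a measure" and p :: "real^'d::finite \<Rightarrow> 'a \<Rightarrow> real"
    and \<Theta> :: "(real^'d) set" and \<theta> :: "real^'d"
    and P :: "'w measure" and X :: "nat \<Rightarrow> 'w \<Rightarrow> 'a"
    and \<theta>hat A B :: "nat \<Rightarrow> 'w \<Rightarrow> real^'d"
  assumes model: "stat_model M p \<Theta>"
    and reg: "\<theta> \<in> Theta_reg M p \<Theta>"
    and moments: "moment_conditions M p \<Theta> \<theta>"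
    and P: "prob_space P"
    and indep: "prob_space.indep_vars P (\<lambda>_. M) X UNIV"
    and ident: "\<And>t. distr P M (X t) = density M (\<lambda>x. ennreal (p \<theta> x))"
    and meas: "\<And>n. \<theta>hat n \<in> borel_measurable P" "\<And>n. A n \<in> borel_measurable P"
              "\<And>n. B n \<in> borel_measurable P"
    and expansion: "o_p P (\<lambda>n \<omega>. (\<theta>hat n \<omega> - \<theta>) - (1 / sqrt (real n)) *\<^sub>R A n \<omega>
                                    - (1 / real n) *\<^sub>R B n \<omega>) (\<lambda>n. 1 / real n)"
    and A_bdd: "O_p1 P A" and B_bdd: "O_p1 P B"
    and score_expansion: "\<And>i. o_p P (\<lambda>n \<omega>.
          partial i (loglik p X n \<omega>) \<theta>
          + (\<Sum>j\<in>UNIV. covHess M p (loglik p X n \<omega>) i j \<theta> * (\<theta>hat n \<omega> - \<theta>) $ j)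
          + (1/2) * (\<Sum>j\<in>UNIV. \<Sum>k\<in>UNIV. cov3 M p (loglik p X n \<omega>) i j k \<theta>
                                          * (\<theta>hat n \<omega> - \<theta>) $ j * (\<theta>hat n \<omega> - \<theta>) $ k))
          (\<lambda>n. 1 / sqrt (real n))"
    and A_control: "o_p P (\<lambda>n \<omega>. A n \<omega> - (1 / sqrt (real n)) *\<^sub>R
                             (fisher_inv M p \<theta> *v (\<chi> i. partial i (loglik p X n \<omega>) \<theta>)))
                      (\<lambda>n. 1 / sqrt (real n))"
  shows "\<And>i. o_p P (\<lambda>n \<omega>.
          (fisher M p \<theta> *v B n \<omega>) $ i
          - (\<Sum>j\<in>UNIV. (1 / sqrt (real n)) * (covHess M p (loglik p X n \<omega>) i j \<theta>
                                               + real n * fisher M p \<theta> $ i $ j) * A n \<omega> $ j)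
          - (1/2) * (\<Sum>j\<in>UNIV. \<Sum>k\<in>UNIV. (1 / real n) * cov3 M p (loglik p X n \<omega>) i j k \<theta>
                                          * A n \<omega> $ j * A n \<omega> $ k))
          (\<lambda>n. 1)"
proof -
  have th: "\<theta> \<in> \<Theta>" using reg by (simp add: Theta_reg_def)
  have inv: "invertible (fisher M p \<theta>)"
    using reg by (intro lambda_min_invertible) (simp add: Theta_reg_def)
  have dt: "det (fisher M p \<theta>) \<noteq> 0" using inv invertible_det_nz by blast
  have ggi: "fisher M p \<theta> ** fisher_inv M p \<theta> = mat 1"
    using inv unfolding invertible_def fisher_inv_def matrix_inv_def by (rule someI2_ex) auto
  have qm: "p \<theta> \<in> borel_measurable M" using pmeas[OF model th] .
  have qnn: "\<And>x. x \<in> space M \<Longrightarrow> 0 \<le> p \<theta> x" using ppos[OF model th] less_imp_le by blast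
  have XM: "X t \<in> measurable P M" for t using indep P by (auto simp: prob_space.indep_vars_def)
  have Xsp: "\<And>t \<omega>. \<omega> \<in> space P \<Longrightarrow> X t \<omega> \<in> space M" using XM measurable_space by metis
  define u where "u i n \<omega> = (\<Sum>t<n. partial i (logp p (X t \<omega>)) \<theta>)" for i n \<omega>
  define d2 where "d2 i j n \<omega> = (\<Sum>t<n. partial i (partial j (logp p (X t \<omega>))) \<theta>)" for i j n \<omega>
  define d3 where "d3 k i j n \<omega> = (\<Sum>t<n. partial k (partial i (partial j (logp p (X t \<omega>)))) \<theta>)" for k i j n \<omega>
  define \<Gamma> where "\<Gamma> m i j = christoffel M p m i j \<theta>" for m i j
  define \<Gamma>' where "\<Gamma>' m i j k = partial k (christoffel M p m i j) \<theta>" for m i j k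
  define g where "g = fisher M p \<theta>"
  have Lsum: "loglik p X n \<omega> = (\<lambda>v. \<Sum>t\<in>{..<n}. logp p (X t \<omega>) v)" for n \<omega>
    unfolding loglik_def logp_def by simp
  have C3X: "\<And>t. t \<in> {..<n} \<Longrightarrow> Ck_on 3 \<Theta> (logp p (X t \<omega>))" if "\<omega> \<in> space P" for n \<omega>
    using C3[OF model Xsp[OF that]] by blast
  have pU: "partial i (loglik p X n \<omega>) \<theta> = u i n \<omega>"
    and pD2: "partial i (partial j (loglik p X n \<omega>)) \<theta> = d2 i j n \<omega>"
    and pD3: "partial k (partial i (partial j (loglik p X n \<omega>))) \<theta> = d3 k i j n \<omega>"
    and hD1: "has_partial k (partial m (loglik p X n \<omega>)) \<theta>"
    and hD2: "has_partial k (partial i (partial j (loglik p X n \<omega>))) \<theta>"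
    if "\<omega> \<in> space P" for i j k m n \<omega>
    unfolding Lsum u_def d2_def d3_def using partial_sum_open[OF opn[OF model] finite_lessThan C3X[OF that] th] by auto
  have cH: "covHess M p (loglik p X n \<omega>) i j \<theta> = d2 i j n \<omega> - (\<Sum>m\<in>UNIV. \<Gamma> m i j * u m n \<omega>)"
    if "\<omega> \<in> space P" for i j n \<omega>
    unfolding covHess_def \<Gamma>_def using pU[OF that] pD2[OF that] by simp
  have pcH: "partial k (covHess M p (loglik p X n \<omega>) i j) \<theta>
      = d3 k i j n \<omega> - (\<Sum>m\<in>UNIV. \<Gamma>' m i j k * u m n \<omega> + \<Gamma> m i j * d2 k m n \<omega>)"
    if "\<omega> \<in> space P" for i j k n \<omega>
    using partial_covHess[OF hD2[OF that] hD1[OF that] christoffel_has_partial[OF model th dt]]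
    unfolding \<Gamma>_def \<Gamma>'_def using pU[OF that] pD2[OF that] pD3[OF that] by simp
  have cC: "cov3 M p (loglik p X n \<omega>) i j k \<theta>
      = d3 k i j n \<omega> - (\<Sum>m\<in>UNIV. \<Gamma>' m i j k * u m n \<omega> + \<Gamma> m i j * d2 k m n \<omega>)
        - (\<Sum>m\<in>UNIV. \<Gamma> m k i * covHess M p (loglik p X n \<omega>) m j \<theta>)
        - (\<Sum>m\<in>UNIV. \<Gamma> m k j * covHess M p (loglik p X n \<omega>) i m \<theta>)"
    if "\<omega> \<in> space P" for i j k n \<omega>
    unfolding cov3_def \<Gamma>_def[symmetric] using pcH[OF that] by simp
  have um[measurable]: "(\<lambda>\<omega>. u i n \<omega>) \<in> borel_measurable P" for i n
    unfolding u_def by (intro borel_measurable_sum measurable_compose[OF XM m1[OF model th]])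
  have d2m[measurable]: "(\<lambda>\<omega>. d2 i j n \<omega>) \<in> borel_measurable P" for i j n
    unfolding d2_def by (intro borel_measurable_sum measurable_compose[OF XM m2[OF model th]])
  have d3m[measurable]: "(\<lambda>\<omega>. d3 k i j n \<omega>) \<in> borel_measurable P" for k i j n
    unfolding d3_def by (intro borel_measurable_sum measurable_compose[OF XM m3[OF model th]])
  have mU[measurable]: "(\<lambda>\<omega>. partial i (loglik p X n \<omega>) \<theta>) \<in> borel_measurable P" for i n
    using um[of i n] measurable_cong[of P "\<lambda>\<omega>. partial i (loglik p X n \<omega>) \<theta>" "\<lambda>\<omega>. u i n \<omega>"] pU by simp
  have mH[measurable]: "(\<lambda>\<omega>. covHess M p (loglik p X n \<omega>) i j \<theta>) \<in> borel_measurable P" for i j n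
  proof -
    have "(\<lambda>\<omega>. d2 i j n \<omega> - (\<Sum>m\<in>UNIV. \<Gamma> m i j * u m n \<omega>)) \<in> borel_measurable P" by measurable
    then show ?thesis using measurable_cong[of P "\<lambda>\<omega>. covHess M p (loglik p X n \<omega>) i j \<theta>"] cH by simp
  qed
  have mC[measurable]: "(\<lambda>\<omega>. cov3 M p (loglik p X n \<omega>) i j k \<theta>) \<in> borel_measurable P" for i j k n
  proof -
    have "(\<lambda>\<omega>. d3 k i j n \<omega> - (\<Sum>m\<in>UNIV. \<Gamma>' m i j k * u m n \<omega> + \<Gamma> m i j * d2 k m n \<omega>)
        - (\<Sum>m\<in>UNIV. \<Gamma> m k i * covHess M p (loglik p X n \<omega>) m j \<theta>)
        - (\<Sum>m\<in>UNIV. \<Gamma> m k j * covHess M p (loglik p X n \<omega>) i m \<theta>)) \<in> borel_measurable P" by measurable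
    then show ?thesis using measurable_cong[of P "\<lambda>\<omega>. cov3 M p (loglik p X n \<omega>) i j k \<theta>"] cC by simp
  qed
  have cu: "cvg0 P (\<lambda>n \<omega>. u i n \<omega> / real n)" for i
  proof -
    have "cvg0 P (\<lambda>n \<omega>. (\<Sum>t<n. partial i (logp p (X t \<omega>)) \<theta>) / real n - (\<integral>x. p \<theta> x * partial i (logp p x) \<theta> \<partial>M))"
      by (rule wlln[where q="p \<theta>", OF P indep ident qm qnn m1[OF model th] E1(1)[OF model th] S1[OF model th]])
    then show ?thesis by (rule cvg0_eq[OF P]) (simp add: E1(2)[OF model th] u_def)
  qed
  have cd: "cvg0 P (\<lambda>n \<omega>. d2 i j n \<omega> / real n + fisher M p \<theta> $ i $ j)" for i j
  proof -
    have "cvg0 P (\<lambda>n \<omega>. (\<Sum>t<n. partial i (partial j (logp p (X t \<omega>))) \<theta>) / real n - (\<integral>x. p \<theta> x * partial i (partial j (logp p x)) \<theta> \<partial>M))"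
      by (rule wlln[where q="p \<theta>", OF P indep ident qm qnn m2[OF model th] E2(1)[OF model th] S2[OF model moments th]])
    then show ?thesis by (rule cvg0_eq[OF P]) (simp add: E2(2)[OF model th] d2_def)
  qed
  have bt: "bddp P (\<lambda>n \<omega>. d3 k i j n \<omega> / real n)" for k i j
  proof -
    have "bddp P (\<lambda>n \<omega>. (\<Sum>t<n. partial k (partial i (partial j (logp p (X t \<omega>)))) \<theta>) / real n)"
      by (rule markov_bddp[where q="p \<theta>", OF P indep ident qm qnn m3[OF model th] T1[OF model moments th]])
    then show ?thesis by (rule bddp_eq[OF P]) (simp add: d3_def)
  qed
  have Hn: "cvg0 P (\<lambda>n \<omega>. covHess M p (loglik p X n \<omega>) i j \<theta> / real n + fisher M p \<theta> $ i $ j)" for i j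
  proof -
    have "cvg0 P (\<lambda>n \<omega>. (d2 i j n \<omega> / real n + fisher M p \<theta> $ i $ j) - (\<Sum>m\<in>UNIV. \<Gamma> m i j * (u m n \<omega> / real n)))"
      by (intro cvg0_diff[OF P] cd cvg0_sum[OF P] finite_UNIV cvg0_cmult[OF P] cu) simp
    then show ?thesis
      by (rule cvg0_eq[OF P]) (simp add: cH diff_divide_distrib sum_divide_distrib)
  qed
  have Hb: "bddp P (\<lambda>n \<omega>. covHess M p (loglik p X n \<omega>) i j \<theta> / real n)" for i j
  proof -
    have "bddp P (\<lambda>n \<omega>. (covHess M p (loglik p X n \<omega>) i j \<theta> / real n + fisher M p \<theta> $ i $ j) - fisher M p \<theta> $ i $ j)"
      by (intro bddp_diff[OF P] cvg0_imp_bddp[OF P] Hn bddp_const[OF P])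
    then show ?thesis by (rule bddp_eq[OF P]) simp
  qed
  have Kn: "bddp P (\<lambda>n \<omega>. cov3 M p (loglik p X n \<omega>) i j k \<theta> / real n)" for i j k
  proof -
    have "bddp P (\<lambda>n \<omega>. d3 k i j n \<omega> / real n
        - (\<Sum>m\<in>UNIV. \<Gamma>' m i j k * (u m n \<omega> / real n) + \<Gamma> m i j * ((d2 k m n \<omega> / real n + fisher M p \<theta> $ k $ m) - fisher M p \<theta> $ k $ m))
        - (\<Sum>m\<in>UNIV. \<Gamma> m k i * (covHess M p (loglik p X n \<omega>) m j \<theta> / real n))
        - (\<Sum>m\<in>UNIV. \<Gamma> m k j * (covHess M p (loglik p X n \<omega>) i m \<theta> / real n)))"
      by (intro bddp_diff[OF P] bt bddp_sum[OF P] finite_UNIV bddp_add[OF P] bddp_cmult[OF P]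
          cvg0_imp_bddp[OF P] cu cd bddp_const[OF P] Hb) simp_all
    then show ?thesis
      by (rule bddp_eq[OF P]) (simp add: cC diff_divide_distrib add_divide_distrib sum_divide_distrib)
  qed
  have ev_pos: "\<forall>\<^sub>F n in sequentially. (n::nat) > 0" by (rule eventually_gt_at_top)
  have lim_s: "(\<lambda>n. 1 / sqrt (real n)) \<longlonglongrightarrow> 0"
  proof -
    have "(\<lambda>n. sqrt (1 / real n)) \<longlonglongrightarrow> sqrt 0"
      by (intro tendsto_real_sqrt) (simp add: lim_1_over_n)
    then show ?thesis by (simp add: real_sqrt_divide)
  qed
  have lim_n: "(\<lambda>n. 1 / real n) \<longlonglongrightarrow> 0" by (rule lim_1_over_n)
  have rs: "\<forall>\<^sub>F n in sequentially. 1 / sqrt (real n) > 0" using ev_pos by eventually_elim simp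
  have rn: "\<forall>\<^sub>F n in sequentially. 1 / real n > 0" using ev_pos by eventually_elim simp
  have thetam[measurable]: "(\<lambda>\<omega>. \<theta>hat n \<omega> $ j) \<in> borel_measurable P" for n j
    using vec_nth_meas[OF meas(1)] .
  have Am[measurable]: "(\<lambda>\<omega>. A n \<omega> $ j) \<in> borel_measurable P" for n j
    using vec_nth_meas[OF meas(2)] .
  have Bm[measurable]: "(\<lambda>\<omega>. B n \<omega> $ j) \<in> borel_measurable P" for n j
    using vec_nth_meas[OF meas(3)] .
  define Uv where "Uv n \<omega> = (\<chi> i. partial i (loglik p X n \<omega>) \<theta>)" for n \<omega>
  define VV where "VV n \<omega> = A n \<omega> - (1 / sqrt (real n)) *\<^sub>R (fisher_inv M p \<theta> *v Uv n \<omega>)" for n \<omega>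
  define DD where "DD n \<omega> = (\<theta>hat n \<omega> - \<theta>) - (1 / sqrt (real n)) *\<^sub>R A n \<omega> - (1 / real n) *\<^sub>R B n \<omega>" for n \<omega>
  have VVc: "VV n \<omega> $ j = A n \<omega> $ j - (1 / sqrt (real n)) * (\<Sum>l\<in>UNIV. fisher_inv M p \<theta> $ j $ l * partial l (loglik p X n \<omega>) \<theta>)" for n \<omega> j
    unfolding VV_def Uv_def by (simp add: matrix_vector_mult_def)
  have DDc: "DD n \<omega> $ j = \<theta>hat n \<omega> $ j - \<theta> $ j - (1 / sqrt (real n)) * A n \<omega> $ j - (1 / real n) * B n \<omega> $ j" for n \<omega> j
    unfolding DD_def by simp
  have VVm: "VV n \<in> borel_measurable P" for n
    by (rule vec_meas_from_nth) (unfold VVc, measurable)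
  have DDm: "DD n \<in> borel_measurable P" for n
    by (rule vec_meas_from_nth) (unfold DDc, measurable)
  have cV: "cvg0 P (\<lambda>n \<omega>. VV n \<omega> $ j / (1 / sqrt (real n)))" for j
    by (rule o_p_scaled_gen[OF P _ VVm _ _ rs, where F="\<lambda>x. x $ j"])
       (use A_control[folded Uv_def, folded VV_def] vec_nth_meas[OF VVm] component_le_norm_cart in auto)
  have cDD: "cvg0 P (\<lambda>n \<omega>. DD n \<omega> $ j / (1 / real n))" for j
    by (rule o_p_scaled_gen[OF P _ DDm _ _ rn, where F="\<lambda>x. x $ j"])
       (use expansion[folded DD_def] vec_nth_meas[OF DDm] component_le_norm_cart in auto)
  have cA: "bddp P (\<lambda>n \<omega>. A n \<omega> $ j)" for j by (rule O_p1_coord[OF P A_bdd meas(2)])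
  have cB: "bddp P (\<lambda>n \<omega>. B n \<omega> $ j)" for j by (rule O_p1_coord[OF P B_bdd meas(3)])
  define EE where "EE i n \<omega> = partial i (loglik p X n \<omega>) \<theta>
          + (\<Sum>j\<in>UNIV. covHess M p (loglik p X n \<omega>) i j \<theta> * (\<theta>hat n \<omega> - \<theta>) $ j)
          + (1/2) * (\<Sum>j\<in>UNIV. \<Sum>k\<in>UNIV. cov3 M p (loglik p X n \<omega>) i j k \<theta>
                                          * (\<theta>hat n \<omega> - \<theta>) $ j * (\<theta>hat n \<omega> - \<theta>) $ k)" for i n \<omega>
  have EEm[measurable]: "(\<lambda>\<omega>. EE i n \<omega>) \<in> borel_measurable P" for i n
    unfolding EE_def by simp measurable
  have cE: "cvg0 P (\<lambda>n \<omega>. EE i n \<omega>)" for i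
  proof -
    have c1: "cvg0 P (\<lambda>n \<omega>. EE i n \<omega> / (1 / sqrt (real n)))"
      by (rule o_p_scaled_gen[OF P _ _ _ _ rs, where F="\<lambda>x. x"])
         (use score_expansion[of i, folded EE_def] EEm in auto)
    have "cvg0 P (\<lambda>n \<omega>. EE i n \<omega> / (1 / sqrt (real n)) * (1 / sqrt (real n)))"
      by (rule cvg0_mult_bddp[OF P c1 cvg0_imp_bddp[OF P cvg0_det[OF P lim_s]]])
    then show ?thesis
    proof (rule cvg0_cong[OF P])
      show "\<forall>\<^sub>F n in sequentially. \<forall>\<omega>\<in>space P. EE i n \<omega> / (1 / sqrt (real n)) * (1 / sqrt (real n)) = EE i n \<omega>"
        using ev_pos by eventually_elim simp
    qed simp
  qed
  define W where "W j k n \<omega> = real n * (\<theta>hat n \<omega> - \<theta>) $ j * (\<theta>hat n \<omega> - \<theta>) $ k - A n \<omega> $ j * A n \<omega> $ k" for j k n \<omega>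
  have cW: "cvg0 P (W j k)" for j k
  proof -
    define R where "R j n \<omega> = B n \<omega> $ j + DD n \<omega> $ j / (1 / real n)" for j n \<omega>
    have bR: "bddp P (R j)" for j
      unfolding R_def by (intro bddp_add[OF P] cB cvg0_imp_bddp[OF P] cDD)
    have "cvg0 P (\<lambda>n \<omega>. (1 / sqrt (real n)) * (A n \<omega> $ j * R k n \<omega> + R j n \<omega> * A n \<omega> $ k)
        + (1 / real n) * (R j n \<omega> * R k n \<omega>))"
      by (intro cvg0_add[OF P] cvg0_mult_bddp[OF P] cvg0_det[OF P] lim_s lim_n
          bddp_add[OF P] bddp_mult[OF P] cA bR)
    then show ?thesis
    proof (rule cvg0_cong[OF P])
      show "\<forall>\<^sub>F n in sequentially. \<forall>\<omega>\<in>space P. (1 / sqrt (real n)) * (A n \<omega> $ j * R k n \<omega> + R j n \<omega> * A n \<omega> $ k)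
        + (1 / real n) * (R j n \<omega> * R k n \<omega>) = W j k n \<omega>"
        using ev_pos
      proof eventually_elim
        case (elim n)
        have s: "sqrt (real n) > 0" "sqrt (real n) * sqrt (real n) = real n" using elim by auto
        show ?case
        proof
          fix \<omega> assume "\<omega> \<in> space P"
          show "(1 / sqrt (real n)) * (A n \<omega> $ j * R k n \<omega> + R j n \<omega> * A n \<omega> $ k)
            + (1 / real n) * (R j n \<omega> * R k n \<omega>) = W j k n \<omega>"
            unfolding W_def R_def DDc vector_minus_component by (rule W_ident'[OF s])
        qed
      qed
      fix n show "W j k n \<in> borel_measurable P" unfolding W_def vector_minus_component by measurable
    qed
  qed
  define Yt where "Yt i n \<omega> = - EE i n \<omega>
     - (\<Sum>j\<in>UNIV. fisher M p \<theta> $ i $ j * (VV n \<omega> $ j / (1 / sqrt (real n))))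
     + (\<Sum>j\<in>UNIV. (covHess M p (loglik p X n \<omega>) i j \<theta> / real n + fisher M p \<theta> $ i $ j) * B n \<omega> $ j)
     + (\<Sum>j\<in>UNIV. (covHess M p (loglik p X n \<omega>) i j \<theta> / real n) * (DD n \<omega> $ j / (1 / real n)))
     + (1/2) * (\<Sum>j\<in>UNIV. \<Sum>k\<in>UNIV. (cov3 M p (loglik p X n \<omega>) i j k \<theta> / real n) * W j k n \<omega>)" for i n \<omega>
  have cY: "cvg0 P (Yt i)" for i
    unfolding Yt_def
    by (intro cvg0_add[OF P] cvg0_diff[OF P] cvg0_neg[OF P] cE cvg0_sum[OF P] finite_UNIV
        cvg0_cmult[OF P] cV cvg0_mult_bddp[OF P] Hn cB cvg0_mult_bddp'[OF P] Hb cDD Kn cW) simp_all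
  show "o_p P (\<lambda>n \<omega>.
          (fisher M p \<theta> *v B n \<omega>) $ i
          - (\<Sum>j\<in>UNIV. (1 / sqrt (real n)) * (covHess M p (loglik p X n \<omega>) i j \<theta>
                                               + real n * fisher M p \<theta> $ i $ j) * A n \<omega> $ j)
          - (1/2) * (\<Sum>j\<in>UNIV. \<Sum>k\<in>UNIV. (1 / real n) * cov3 M p (loglik p X n \<omega>) i j k \<theta>
                                          * A n \<omega> $ j * A n \<omega> $ k))
          (\<lambda>n. 1)" for i
  proof (rule cvg0_imp_o_p[OF P cY])
    show "\<forall>\<^sub>F n in sequentially. \<forall>\<omega>\<in>space P. Yt i n \<omega> = (fisher M p \<theta> *v B n \<omega>) $ i
          - (\<Sum>j\<in>UNIV. (1 / sqrt (real n)) * (covHess M p (loglik p X n \<omega>) i j \<theta>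
                                               + real n * fisher M p \<theta> $ i $ j) * A n \<omega> $ j)
          - (1/2) * (\<Sum>j\<in>UNIV. \<Sum>k\<in>UNIV. (1 / real n) * cov3 M p (loglik p X n \<omega>) i j k \<theta>
                                          * A n \<omega> $ j * A n \<omega> $ k)"
      using ev_pos
    proof eventually_elim
      case (elim n)
      show ?case
      proof
        fix \<omega> assume "\<omega> \<in> space P"
        show "Yt i n \<omega> = (fisher M p \<theta> *v B n \<omega>) $ i
          - (\<Sum>j\<in>UNIV. (1 / sqrt (real n)) * (covHess M p (loglik p X n \<omega>) i j \<theta>
                                               + real n * fisher M p \<theta> $ i $ j) * A n \<omega> $ j)
          - (1/2) * (\<Sum>j\<in>UNIV. \<Sum>k\<in>UNIV. (1 / real n) * cov3 M p (loglik p X n \<omega>) i j k \<theta>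
                                          * A n \<omega> $ j * A n \<omega> $ k)"
          using key_identity[OF elim ggi, where B="B n \<omega>" and A="A n \<omega>" and Dl="\<theta>hat n \<omega> - \<theta>"
              and U="Uv n \<omega>" and Hs="\<lambda>i j. covHess M p (loglik p X n \<omega>) i j \<theta>"
              and C="\<lambda>i j k. cov3 M p (loglik p X n \<omega>) i j k \<theta>" and i=i]
          unfolding Yt_def EE_def VV_def DD_def W_def Uv_def by simp
      qed
    qed
  qed
qed

end
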